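(* Assume (C1) $a_i-\sum_{k=1}^m b_{j_k,k}\notin\mathbb Z$ for all $1\le i\le p$ and all $(j_1,\dots,j_m)\in\{1,\dots,p\}^m$, and (C2) $b_{j,k}-b_{j',k}\notin\mathbb Z$ for all $1\le j<j'\le p$, $1\le k\le m$. For $J=(j_1,\dots,j_m)\in\{1,\dots,p\}^m$ put $\mu_{J,k}=1-b_{j_k,k}$, $\Sigma_J=\sum_{k=1}^m\mu_{J,k}$, and $$\Phi_J(a,B;x)=\Big(\prod_{k=1}^m x_k^{\mu_{J,k}}\Big)F_C^{p,m}\big(a+\Sigma_J\mathbf 1_p,\ \eta_{j_1}(b_1),\dots,\eta_{j_m}(b_m);x\big).$$ Then on a small simply connected open subset of $\mathbb D\cap\{x_1\cdots x_m\neq0\}$ (with branches of the powers fixed), the $p^m$ functions $\Phi_J(a,B;x)$, $J\in\{1,\dots,p\}^m$, are linearly independent solutions of the system $\mathcal F_C^{p,m}(a,B)$.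
   Context: $F_C^{p,m}(a,B;x)=\sum_{n\in\mathbb N^m}\frac{\prod_{i=1}^p(a_i,n_1+\cdots+n_m)}{\prod_{k=1}^m\{(b_{1,k},n_k)\cdots(b_{p-1,k},n_k)n_k!\}}x^n$, $(\alpha,n)=\Gamma(\alpha+n)/\Gamma(\alpha)$, where $a={}^t(a_1,\dots,a_p)$, $B=(b_1,\dots,b_m)$ with columns $b_k={}^t(b_{1,k},\dots,b_{p-1,k},b_{p,k})$, $b_{p,k}=1$. $\mathbb D=\{x\in\mathbb C^m\mid\sum_k|x_k|^{1/p}<1\}$. $\mathbf 1_p={}^t(1,\dots,1)\in\mathbb Z^p$, $e_j$ the $j$-th unit column vector of length $p$, and $\eta_j(b_k)=b_k+(1-b_{j,k})(\mathbf 1_p+e_j-e_p)$ (so $\eta_p$ is the identity and the last entry of $\eta_j(b_k)$ is always $1$). The system $\mathcal F_C^{p,m}(a,B)$ consists of the $m$ equations $\theta_k(b_{1,k}-1+\theta_k)\cdots(b_{p-1,k}-1+\theta_k)f=x_k(a_1+\theta_1+\cdots+\theta_m)\cdots(a_p+\theta_1+\cdots+\theta_m)f$, $k=1,\dots,m$, with $\theta_k=x_k\partial/\partial x_k$. *)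

theory Defs
  imports "HOL-Analysis.Analysis"
begin

text \<open>Points of C^m are vectors of type complex^'m, where m = CARD('m).
  Row indices j of the parameter matrix B range over {1..p}; b j k is b_{j,k}.\<close>

definition FC :: "nat \<Rightarrow> (nat \<Rightarrow> complex) \<Rightarrow> (nat \<Rightarrow> 'm::finite \<Rightarrow> complex)
                   \<Rightarrow> complex^'m \<Rightarrow> complex" where
  "FC p a b x = (\<Sum>\<^sub>\<infinity> n :: 'm \<Rightarrow> nat.
      (\<Prod>i\<in>{1..p}. pochhammer (a i) (\<Sum>k\<in>UNIV. n k))
      / (\<Prod>k\<in>UNIV. (\<Prod>j\<in>{1..<p}. pochhammer (b j k) (n k)) * fact (n k))
      * (\<Prod>k\<in>UNIV. (x $ k) ^ n k))"

definition domD :: "nat \<Rightarrow> (complex^'m::finite) set" where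
  "domD p = {x. (\<Sum>k\<in>UNIV. norm (x $ k) powr (1 / real p)) < 1}"

definition eta :: "nat \<Rightarrow> nat \<Rightarrow> (nat \<Rightarrow> complex) \<Rightarrow> nat \<Rightarrow> complex" where
  "eta p j bk i = bk i + (1 - bk j) *
      (1 + (if i = j then 1 else 0) - (if i = p then 1 else 0))"

definition upd :: "complex^'m::finite \<Rightarrow> 'm \<Rightarrow> complex \<Rightarrow> complex^'m" where
  "upd x k z = (\<chi> i. if i = k then z else x $ i)"

definition theta :: "'m::finite \<Rightarrow> (complex^'m \<Rightarrow> complex) \<Rightarrow> complex^'m \<Rightarrow> complex" where
  "theta k f x = x $ k * deriv (\<lambda>z. f (upd x k z)) (x $ k)"

definition shift_theta :: "'m::finite \<Rightarrow> complex \<Rightarrow> (complex^'m \<Rightarrow> complex) \<Rightarrow> complex^'m \<Rightarrow> complex" where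
  "shift_theta k c f x = c * f x + theta k f x"

definition shift_total :: "complex \<Rightarrow> (complex^'m::finite \<Rightarrow> complex) \<Rightarrow> complex^'m \<Rightarrow> complex" where
  "shift_total c f x = c * f x + (\<Sum>k\<in>UNIV. theta k f x)"

definition FC_lhs :: "nat \<Rightarrow> (nat \<Rightarrow> 'm::finite \<Rightarrow> complex) \<Rightarrow> 'm
                      \<Rightarrow> (complex^'m \<Rightarrow> complex) \<Rightarrow> complex^'m \<Rightarrow> complex" where
  "FC_lhs p b k f = theta k (foldr (\<lambda>j g. shift_theta k (b j k - 1) g) [1..<p] f)"

definition FC_rhs :: "nat \<Rightarrow> (nat \<Rightarrow> complex) \<Rightarrow> 'm::finite
                      \<Rightarrow> (complex^'m \<Rightarrow> complex) \<Rightarrow> complex^'m \<Rightarrow> complex" where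
  "FC_rhs p a k f x = x $ k * foldr (\<lambda>i g. shift_total (a i) g) [1..<p+1] f x"

definition solves_FC :: "nat \<Rightarrow> (nat \<Rightarrow> complex) \<Rightarrow> (nat \<Rightarrow> 'm::finite \<Rightarrow> complex)
                         \<Rightarrow> (complex^'m) set \<Rightarrow> (complex^'m \<Rightarrow> complex) \<Rightarrow> bool" where
  "solves_FC p a b U f \<longleftrightarrow> (\<forall>k. \<forall>x\<in>U. FC_lhs p b k f x = FC_rhs p a k f x)"

text \<open>Holomorphy in several variables (Osgood): continuous and holomorphic in each variable.\<close>
definition holo_several :: "(complex^'m::finite) set \<Rightarrow> (complex^'m \<Rightarrow> complex) \<Rightarrow> bool" where
  "holo_several U f \<longleftrightarrow> continuous_on U f \<and>
     (\<forall>x\<in>U. \<forall>k. (\<lambda>z. f (upd x k z)) field_differentiable (at (x $ k)))"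

text \<open>Phi_J, with the powers x_k^mu given by exp(mu * L_k x) for fixed log branches L_k.\<close>
definition PhiJ :: "nat \<Rightarrow> (nat \<Rightarrow> complex) \<Rightarrow> (nat \<Rightarrow> 'm::finite \<Rightarrow> complex)
                    \<Rightarrow> ('m \<Rightarrow> complex^'m \<Rightarrow> complex) \<Rightarrow> ('m \<Rightarrow> nat) \<Rightarrow> complex^'m \<Rightarrow> complex" where
  "PhiJ p a b L J x =
     (let \<mu> = (\<lambda>k. 1 - b (J k) k); \<Sigma> = (\<Sum>k\<in>UNIV. \<mu> k) in
      (\<Prod>k\<in>UNIV. exp (\<mu> k * L k x)) *
      FC p (\<lambda>i. a i + \<Sigma>) (\<lambda>i k. eta p (J k) (\<lambda>j. b j k) i) x)"

end

theory Submission
  imports Defs "HOL-Complex_Analysis.Complex_Analysis"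
begin

definition mon :: "complex^'m::finite \<Rightarrow> ('m \<Rightarrow> nat) \<Rightarrow> complex" where
  "mon x n = (\<Prod>k\<in>UNIV. (x$k)^(n k))"
definition rmon :: "('m::finite \<Rightarrow> real) \<Rightarrow> ('m \<Rightarrow> nat) \<Rightarrow> real" where
  "rmon r n = (\<Prod>k\<in>UNIV. r k ^ n k)"
definition deg :: "('m::finite \<Rightarrow> nat) \<Rightarrow> nat" where
  "deg n = (\<Sum>k\<in>UNIV. n k)"
definition Reg :: "nat \<Rightarrow> ('m::finite \<Rightarrow> real) set" where
  "Reg p = {r. (\<forall>k. 0 \<le> r k) \<and> (\<Sum>k\<in>UNIV. r k powr (1/real p)) < 1}"
definition good :: "nat \<Rightarrow> (('m::finite \<Rightarrow> nat) \<Rightarrow> complex) \<Rightarrow> bool" where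
  "good p c \<longleftrightarrow> (\<forall>r\<in>Reg p. \<forall>d::nat.
      (\<lambda>n. (real (deg n) + 1)^d * (norm (c n) * rmon r n)) summable_on UNIV)"
definition PS :: "(('m::finite \<Rightarrow> nat) \<Rightarrow> complex) \<Rightarrow> complex^'m \<Rightarrow> complex" where
  "PS c x = (\<Sum>\<^sub>\<infinity>n. c n * mon x n)"
definition nr :: "complex^'m::finite \<Rightarrow> 'm \<Rightarrow> real" where
  "nr x = (\<lambda>k. norm (x$k))"

lemma domD_Reg: "x \<in> domD p \<longleftrightarrow> nr x \<in> Reg p"
  by (simp add: domD_def Reg_def nr_def)

lemma norm_mon: "norm (mon x n) = rmon (nr x) n"
  by (simp add: mon_def rmon_def nr_def norm_power flip: prod_norm)

lemma rmon_nonneg: "(\<And>k. 0 \<le> r k) \<Longrightarrow> 0 \<le> rmon r n"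
  by (simp add: rmon_def prod_nonneg)

lemma rmon_mono: "(\<And>k. 0 \<le> r k) \<Longrightarrow> (\<And>k. r k \<le> s k) \<Longrightarrow> rmon r n \<le> rmon s n"
  unfolding rmon_def by (intro prod_mono) (auto intro: power_mono)

lemma Reg_mono: "s \<in> Reg p \<Longrightarrow> (\<And>k. 0 \<le> r k) \<Longrightarrow> (\<And>k. r k \<le> s k) \<Longrightarrow> r \<in> Reg p"
proof -
  assume s: "s \<in> Reg p" and r0: "\<And>k. 0 \<le> r k" and rs: "\<And>k. r k \<le> s k"
  have "(\<Sum>k\<in>UNIV. r k powr (1/real p)) \<le> (\<Sum>k\<in>UNIV. s k powr (1/real p))"
    by (intro sum_mono powr_mono2) (auto simp: r0 rs)
  with s r0 show ?thesis by (auto simp: Reg_def)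
qed

lemma Reg_slack:
  assumes "r \<in> Reg p" "p \<ge> 1"
  shows "\<exists>\<delta>>0. (\<lambda>k. r k + \<delta>) \<in> Reg p"
proof -
  have r0: "\<And>k. 0 \<le> r k" and lt: "(\<Sum>k\<in>UNIV. r k powr (1/real p)) < 1"
    using assms by (auto simp: Reg_def)
  have "((\<lambda>\<delta>. \<Sum>k\<in>UNIV. (r k + \<delta>) powr (1/real p)) \<longlongrightarrow> (\<Sum>k\<in>UNIV. (r k + 0) powr (1/real p))) (at_right 0)"
    using assms(2)
    by (intro tendsto_sum tendsto_powr2 tendsto_intros)
       (auto simp: eventually_at_right_less r0 intro!: eventually_mono[OF eventually_at_right_less[of 0]] add_nonneg_nonneg)
  with lt have "eventually (\<lambda>\<delta>. (\<Sum>k\<in>UNIV. (r k + \<delta>) powr (1/real p)) < 1) (at_right 0)"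
    by (auto intro: order_tendstoD)
  moreover have "eventually (\<lambda>\<delta>::real. \<delta> > 0) (at_right 0)"
    by (simp add: eventually_at_right_less)
  ultimately have "eventually (\<lambda>\<delta>. \<delta> > 0 \<and> (\<Sum>k\<in>UNIV. (r k + \<delta>) powr (1/real p)) < 1) (at_right (0::real))"
    by eventually_elim auto
  then obtain \<delta> where "\<delta> > 0" "(\<Sum>k\<in>UNIV. (r k + \<delta>) powr (1/real p)) < 1"
    using eventually_happens[of _ "at_right (0::real)"] by (auto simp: trivial_limit_at_right_real)
  with r0 show ?thesis
    by (intro exI[of _ \<delta>]) (auto simp: Reg_def intro: add_nonneg_nonneg)
qed

definition en :: "nat \<Rightarrow> ('m::finite \<Rightarrow> nat)" where
  "en = from_nat_into UNIV"

lemma bij_en: "bij (en :: nat \<Rightarrow> ('m::finite \<Rightarrow> nat))"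
proof -
  have "inj (\<lambda>i::nat. (\<lambda>k::'m. i))" by (auto simp: inj_def fun_eq_iff)
  hence "infinite (UNIV :: ('m \<Rightarrow> nat) set)"
    using range_inj_infinite by (metis infinite_UNIV_nat infinite_super top_greatest)
  thus ?thesis unfolding en_def by (intro bij_betw_from_nat_into) auto
qed

lemma abs_summ_en:
  fixes f :: "('m::finite \<Rightarrow> nat) \<Rightarrow> 'b::banach"
  assumes "(\<lambda>n. norm (f n)) summable_on UNIV"
  shows "summable (\<lambda>i. norm (f (en i)))" "infsum f UNIV = (\<Sum>i. f (en i))"
proof -
  have "(\<lambda>i. norm (f (en i))) summable_on UNIV"
    using summable_on_reindex_bij_betw[OF bij_en, of "\<lambda>n. norm (f n)"] assms by simp
  thus "summable (\<lambda>i. norm (f (en i)))" by (rule summable_on_imp_summable)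
  have "f summable_on UNIV" using assms by (rule abs_summable_summable)
  hence s: "(\<lambda>i. f (en i)) summable_on UNIV"
    using summable_on_reindex_bij_betw[OF bij_en, of f] by simp
  have "infsum f UNIV = infsum (\<lambda>i. f (en i)) UNIV"
    using infsum_reindex_bij_betw[OF bij_en, of f] by simp
  also have "\<dots> = (\<Sum>i. f (en i))"
    using has_sum_imp_sums[OF s[unfolded summable_iff_has_sum_infsum]] by (simp add: sums_iff)
  finally show "infsum f UNIV = (\<Sum>i. f (en i))" .
qed

lemma summ_en_real:
  fixes f :: "('m::finite \<Rightarrow> nat) \<Rightarrow> real"
  assumes "f summable_on UNIV" "\<And>n. f n \<ge> 0"
  shows "summable (\<lambda>i. f (en i))"
  using abs_summ_en(1)[of f] assms by simp

lemma good_abs: "good p c \<Longrightarrow> r \<in> Reg p \<Longrightarrow> (\<lambda>n. norm (c n) * rmon r n) summable_on UNIV"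
  unfolding good_def by (drule bspec, assumption, drule spec[of _ 0]) simp

lemma good_summ:
  assumes "good p c" "x \<in> domD p"
  shows "(\<lambda>n. norm (c n * mon x n)) summable_on UNIV"
  using good_abs[OF assms(1), of "nr x"] assms(2) by (simp add: domD_Reg norm_mult norm_mon)

lemma good_poly:
  assumes g: "good p c" and b: "\<And>n. norm (f n) \<le> C * (real (deg n) + 1)^e"
  shows "good p (\<lambda>n. f n * c n)"
  unfolding good_def
proof (intro ballI allI)
  fix r :: "'a \<Rightarrow> real" and d assume r: "r \<in> Reg p"
  have r0: "\<And>k. 0 \<le> r k" using r by (auto simp: Reg_def)
  have C0: "C \<ge> 0" using b[of undefined] by (smt (verit) norm_ge_zero zero_le_mult_iff zero_less_power
        of_nat_0_le_iff)
  have "(\<lambda>n. C * ((real (deg n) + 1)^(d+e) * (norm (c n) * rmon r n))) summable_on UNIV"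
    using g r unfolding good_def by (intro summable_on_cmult_right) blast
  thus "(\<lambda>n. (real (deg n) + 1)^d * (norm (f n * c n) * rmon r n)) summable_on UNIV"
  proof (rule summable_on_comparison_test)
    fix n
    have "norm (f n * c n) * rmon r n \<le> (C * (real (deg n) + 1)^e) * norm (c n) * rmon r n"
      by (auto simp: norm_mult intro!: mult_right_mono b rmon_nonneg r0)
    hence "(real (deg n) + 1)^d * (norm (f n * c n) * rmon r n) \<le>
       (real (deg n) + 1)^d * ((C * (real (deg n) + 1)^e) * norm (c n) * rmon r n)"
      by (intro mult_left_mono) auto
    thus "(real (deg n) + 1)^d * (norm (f n * c n) * rmon r n) \<le>
       C * ((real (deg n) + 1)^(d+e) * (norm (c n) * rmon r n))"
      by (simp add: power_add algebra_simps)
    show "0 \<le> (real (deg n) + 1)^d * (norm (f n * c n) * rmon r n)"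
      by (auto intro!: mult_nonneg_nonneg rmon_nonneg r0)
  qed
qed

lemma PS_isCont:
  assumes g: "good p c" and p: "p \<ge> 1" and x0: "x0 \<in> domD p"
  shows "isCont (PS c) x0"
proof -
  obtain \<delta> where \<delta>: "\<delta> > 0" "(\<lambda>k. nr x0 k + \<delta>) \<in> Reg p"
    using Reg_slack[OF x0[unfolded domD_Reg] p] by blast
  define r where "r = (\<lambda>k. nr x0 k + \<delta>)"
  define S where "S = {x::complex^'a. \<forall>k. norm (x$k) \<le> r k}"
  have r0: "\<And>k. 0 \<le> r k" using \<delta> by (auto simp: r_def nr_def)
  have SD: "S \<subseteq> domD p"
    using \<delta>(2) by (auto simp: domD_Reg S_def r_def nr_def intro!: Reg_mono[OF \<delta>(2)])
  have ul: "uniform_limit S (\<lambda>N x. \<Sum>i<N. c (en i) * mon x (en i)) (\<lambda>x. \<Sum>i. c (en i) * mon x (en i)) sequentially"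
  proof (rule Weierstrass_m_test[where M="\<lambda>i. norm (c (en i)) * rmon r (en i)"])
    fix i x assume "x \<in> S"
    thus "norm (c (en i) * mon x (en i)) \<le> norm (c (en i)) * rmon r (en i)"
      by (auto simp: norm_mult norm_mon S_def nr_def intro!: mult_left_mono rmon_mono)
  next
    show "summable (\<lambda>i. norm (c (en i)) * rmon r (en i))"
      using \<delta>(2) g by (intro summ_en_real good_abs) (auto simp: r_def rmon_nonneg r0[unfolded r_def])
  qed
  have "continuous_on S (\<lambda>x. \<Sum>i. c (en i) * mon x (en i))"
    by (rule uniform_limit_theorem[OF _ ul]) (auto intro!: always_eventually continuous_intros simp: mon_def)
  moreover have "\<And>x. x \<in> S \<Longrightarrow> PS c x = (\<Sum>i. c (en i) * mon x (en i))"
    unfolding PS_def using SD by (intro abs_summ_en(2) good_summ[OF g]) auto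
  ultimately have cS: "continuous_on S (PS c)" by (metis (no_types, lifting) continuous_on_cong)
  have "ball x0 \<delta> \<subseteq> S"
  proof
    fix x assume "x \<in> ball x0 \<delta>"
    hence "norm (x - x0) < \<delta>" by (simp add: dist_norm norm_minus_commute)
    moreover have "norm (x$k) \<le> norm (x0$k) + norm (x - x0)" for k
      using Finite_Cartesian_Product.norm_nth_le[of "x - x0" k] norm_triangle_ineq[of "x0$k" "(x-x0)$k"]
      by simp
    ultimately have "\<forall>k. norm (x$k) \<le> r k" unfolding r_def nr_def by (smt (verit))
    thus "x \<in> S" by (simp add: S_def)
  qed
  hence "x0 \<in> interior S" using \<delta>(1) by (meson centre_in_ball interior_maximal open_ball subsetD)
  thus "isCont (PS c) x0" using cS continuous_on_interior by blast
qed

lemma PS_cont: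
  assumes g: "good p c" and p: "p \<ge> 1"
  shows "continuous_on (domD p) (PS c)"
  using PS_isCont[OF g p] by (intro continuous_at_imp_continuous_on) auto


lemma prod_split_k: "(\<Prod>l\<in>UNIV. f l) = f k * (\<Prod>l\<in>-{k}. f (l::'m::finite))"
proof -
  have "(\<Prod>l\<in>UNIV. f l) = f k * (\<Prod>l\<in>UNIV - {k}. f l)"
    by (rule prod.remove) auto
  thus ?thesis by (simp add: Compl_eq_Diff_UNIV)
qed

lemma mon_split: "mon x n = (x$k)^(n k) * (\<Prod>l\<in>-{k}. (x$l)^(n l))"
  unfolding mon_def by (rule prod_split_k)

lemma upd_nth: "upd x k z $ l = (if l = k then z else x $ l)"
  by (simp add: upd_def)

lemma upd_same: "upd x k (x$k) = x"
  by (simp add: upd_def vec_eq_iff)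

lemma mon_upd: "mon (upd x k z) n = z^(n k) * (\<Prod>l\<in>-{k}. (x$l)^(n l))"
  unfolding mon_split[of _ _ k] by (simp add: upd_nth)

lemma mon_upd_fun: "mon x (n(k := j)) = (x$k)^j * (\<Prod>l\<in>-{k}. (x$l)^(n l))"
  unfolding mon_split[of _ _ k] by simp

lemma rmon_split: "rmon r n = (r k)^(n k) * (\<Prod>l\<in>-{k}. (r l)^(n l))"
  unfolding rmon_def by (rule prod_split_k)

lemma deg_ge: "n k \<le> deg n"
  unfolding deg_def by (rule member_le_sum) auto

lemma xk_mon: "x$k * mon x (n(k := n k - 1)) = (if n k = 0 then x$k * mon x n else mon x n)"
  by (cases "n k") (auto simp: mon_upd_fun mon_split[of x n k])

lemma PS_deriv:
  assumes g: "good p c" and p: "p \<ge> 1" and x: "x \<in> domD p"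
  shows "(\<lambda>n. norm (c n * of_nat (n k) * mon x (n(k := n k - 1)))) summable_on UNIV"
    and "((\<lambda>z. PS c (upd x k z)) has_field_derivative
           (\<Sum>\<^sub>\<infinity>n. c n * of_nat (n k) * mon x (n(k := n k - 1)))) (at (x$k))"
proof -
  obtain \<delta> where \<delta>: "\<delta> > 0" "(\<lambda>l. nr x l + \<delta>) \<in> Reg p"
    using Reg_slack[OF x[unfolded domD_Reg] p] by blast
  define R where "R = norm (x$k) + \<delta>"
  define r where "r = (nr x)(k := R)"
  have R0: "R > 0" using \<delta> norm_ge_zero[of "x$k"] unfolding R_def by linarith
  have r0: "\<And>l. 0 \<le> r l" using R0 by (auto simp: r_def nr_def)
  have rR: "r \<in> Reg p"
    by (rule Reg_mono[OF \<delta>(2) r0]) (use \<delta>(1) in \<open>auto simp: r_def R_def nr_def\<close>)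
  define S where "S = ball (x$k) \<delta>"
  have zS: "norm z \<le> R" if "z \<in> S" for z
    using that norm_triangle_ineq2[of z "x$k"] by (auto simp: S_def R_def dist_norm norm_minus_commute)
  have updD: "upd x k z \<in> domD p" if "z \<in> S" for z
    unfolding domD_Reg
    by (rule Reg_mono[OF rR]) (auto simp: nr_def upd_nth r_def zS that)
  define M where "M = (\<lambda>n. (real (deg n) + 1) * (norm (c n) * rmon r n) / R)"
  have "(\<lambda>n. (real (deg n) + 1)^1 * (norm (c n) * rmon r n)) summable_on UNIV"
    using g rR unfolding good_def by blast
  hence "(\<lambda>n. (real (deg n) + 1)^1 * (norm (c n) * rmon r n) * (1/R)) summable_on UNIV"
    by (rule summable_on_cmult_left)
  hence Msum: "M summable_on UNIV" by (simp add: M_def)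
  have M0: "M n \<ge> 0" for n using R0 by (auto simp: M_def intro!: divide_nonneg_pos mult_nonneg_nonneg rmon_nonneg r0)
  have bound: "norm (c n * of_nat (n k) * mon (upd x k z) (n(k := n k - 1))) \<le> M n"
    if "z \<in> S" for z n
  proof (cases "n k = 0")
    case True thus ?thesis using M0 by simp
  next
    case False
    have e1: "norm (mon (upd x k z) (n(k := n k - 1))) = norm z ^ (n k - 1) * (\<Prod>l\<in>-{k}. norm (x$l)^(n l))"
      by (simp add: mon_upd_fun upd_nth norm_mult norm_power prod_norm[symmetric])
    have e2: "rmon r n = R^(n k) * (\<Prod>l\<in>-{k}. norm (x$l)^(n l))"
      by (subst rmon_split[of _ _ k]) (auto simp: r_def nr_def intro!: prod.cong)
    have "norm z ^ (n k - 1) \<le> R^(n k - 1)"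
      using zS[OF that] by (intro power_mono) auto
    also have "R^(n k - 1) = R^(n k) / R" using False R0
      by (metis Suc_diff_1 neq0_conv nonzero_mult_div_cancel_left order_less_irrefl power_Suc)
    finally have a: "norm z ^ (n k - 1) \<le> R^(n k) / R" .
    have b: "real (n k) \<le> real (deg n) + 1" using deg_ge[of n k] by linarith
    have P0: "0 \<le> (\<Prod>l\<in>-{k}. norm (x$l)^(n l))" by (simp add: prod_nonneg)
    have "norm (c n * of_nat (n k) * mon (upd x k z) (n(k := n k - 1)))
        = norm (c n) * real (n k) * (norm z ^ (n k - 1) * (\<Prod>l\<in>-{k}. norm (x$l)^(n l)))"
      unfolding norm_mult e1 by simp
    also have "\<dots> \<le> norm (c n) * (real (deg n) + 1) * (R^(n k) / R * (\<Prod>l\<in>-{k}. norm (x$l)^(n l)))"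
      by (intro mult_mono mult_left_mono a b P0) (auto simp: R0 less_imp_le prod_nonneg)
    also have "\<dots> = M n" by (simp add: M_def e2 field_simps)
    finally show ?thesis .
  qed
  show sx: "(\<lambda>n. norm (c n * of_nat (n k) * mon x (n(k := n k - 1)))) summable_on UNIV"
    by (rule summable_on_comparison_test[OF Msum]) (use bound[of "x$k"] \<delta> in \<open>auto simp: S_def upd_same\<close>)
  define f where "f = (\<lambda>i z. c (en i) * mon (upd x k z) (en i))"
  define f' where "f' = (\<lambda>i z. c (en i) * of_nat (en i k) * mon (upd x k z) ((en i)(k := en i k - 1)))"
  have der: "(f i has_field_derivative f' i z) (at z within S)" for i z
  proof -
    define n :: "'a \<Rightarrow> nat" where "n = en i"
    define Q where "Q = (\<Prod>l\<in>-{k}. (vec_nth x l)^(n l))"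
    have "((\<lambda>z. c n * (z^(n k) * Q)) has_field_derivative c n * (of_nat (n k) * z^(n k - 1) * Q)) (at z within S)"
      by (auto intro!: derivative_eq_intros)
    thus ?thesis by (simp add: f_def f'_def mon_upd mon_upd_fun upd_nth n_def[symmetric] Q_def[symmetric] algebra_simps)
  qed
  have uc: "uniformly_convergent_on S (\<lambda>N z. \<Sum>i<N. f' i z)"
  proof (rule Weierstrass_m_test'_ev[where M="\<lambda>i. M (en i)"])
    show "\<forall>\<^sub>F i in sequentially. \<forall>z\<in>S. norm (f' i z) \<le> M (en i)"
      using bound by (auto simp: f'_def)
    show "summable (\<lambda>i. M (en i))" by (rule summ_en_real[OF Msum M0])
  qed
  have xS: "x$k \<in> S" using \<delta> by (simp add: S_def)
  have sum0: "summable (\<lambda>i. f i (x$k))"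
  proof -
    have "summable (\<lambda>i. norm (c (en i) * mon x (en i)))"
      using abs_summ_en(1)[of "\<lambda>n. c n * mon x n"] good_summ[OF g x] by simp
    thus ?thesis by (auto simp: f_def upd_same intro: summable_norm_cancel)
  qed
  have D1: "((\<lambda>z. \<Sum>i. f i z) has_field_derivative (\<Sum>i. f' i (x$k))) (at (x$k))"
    using has_field_derivative_series'(2)[OF _ der uc xS sum0] xS
    by (auto simp: S_def interior_open)
  have D2: "(\<Sum>i. f' i (x$k)) = (\<Sum>\<^sub>\<infinity>n. c n * of_nat (n k) * mon x (n(k := n k - 1)))"
    using abs_summ_en(2)[OF sx] by (simp add: f'_def upd_same)
  have D3: "(\<Sum>i. f i z) = PS c (upd x k z)" if "z \<in> S" for z
    unfolding PS_def f_def using abs_summ_en(2)[OF good_summ[OF g updD[OF that]]] by simp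
  show "((\<lambda>z. PS c (upd x k z)) has_field_derivative
           (\<Sum>\<^sub>\<infinity>n. c n * of_nat (n k) * mon x (n(k := n k - 1)))) (at (x$k))"
    using has_field_derivative_transform_within_open[OF D1[unfolded D2] _ xS D3] by (simp add: S_def)
qed

lemma PS_theta:
  assumes g: "good p c" and p: "p \<ge> 1" and x: "x \<in> domD p"
  shows "theta k (PS c) x = PS (\<lambda>n. of_nat (n k) * c n) x"
proof -
  have "theta k (PS c) x = x$k * (\<Sum>\<^sub>\<infinity>n. c n * of_nat (n k) * mon x (n(k := n k - 1)))"
    unfolding theta_def using PS_deriv(2)[OF assms] by (simp add: DERIV_imp_deriv)
  also have "\<dots> = (\<Sum>\<^sub>\<infinity>n. x$k * (c n * of_nat (n k) * mon x (n(k := n k - 1))))"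
    by (rule infsum_cmult_right'[symmetric])
  also have "\<dots> = PS (\<lambda>n. of_nat (n k) * c n) x"
    unfolding PS_def
  proof (rule infsum_cong)
    fix n
    have "x$k * (c n * of_nat (n k) * mon x (n(k := n k - 1))) = c n * of_nat (n k) * (x$k * mon x (n(k := n k - 1)))"
      by (simp add: algebra_simps)
    also have "\<dots> = of_nat (n k) * c n * mon x n" using xk_mon[of x k n] by (cases "n k = 0") auto
    finally show "x$k * (c n * of_nat (n k) * mon x (n(k := n k - 1))) = of_nat (n k) * c n * mon x n" .
  qed
  finally show ?thesis .
qed

lemma PS_differentiable:
  assumes g: "good p c" and p: "p \<ge> 1" and x: "x \<in> domD p"
  shows "(\<lambda>z. PS c (upd x k z)) field_differentiable (at (x$k))"
  using PS_deriv(2)[OF assms] field_differentiable_def by blast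


definition subexp :: "(nat \<Rightarrow> real) \<Rightarrow> bool" where
  "subexp u \<longleftrightarrow> (\<forall>\<theta>>1. \<exists>C. \<forall>N. u N \<le> C * \<theta>^N)"

lemma ratio_bound:
  fixes u :: "nat \<Rightarrow> real"
  assumes u0: "\<And>N. 0 \<le> u N" and th: "\<theta> > 0" and st: "\<And>N. N \<ge> N0 \<Longrightarrow> u (Suc N) \<le> \<theta> * u N"
  shows "\<exists>C. \<forall>N. u N \<le> C * \<theta>^N"
proof -
  define C where "C = Max ((\<lambda>N. u N / \<theta>^N) ` {..N0})"
  have base: "u N \<le> C * \<theta>^N" if "N \<le> N0" for N
  proof -
    have "u N / \<theta>^N \<le> C" unfolding C_def by (rule Max_ge) (use that in auto)
    thus ?thesis using th by (simp add: divide_le_eq mult.commute)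
  qed
  have "u N \<le> C * \<theta>^N" for N
  proof (induction N)
    case 0 thus ?case by (rule base) simp
  next
    case (Suc N)
    show ?case
    proof (cases "Suc N \<le> N0")
      case True thus ?thesis by (rule base)
    next
      case False
      hence "u (Suc N) \<le> \<theta> * u N" by (intro st) simp
      also have "\<dots> \<le> \<theta> * (C * \<theta>^N)" using Suc th by (intro mult_left_mono) auto
      finally show ?thesis by (simp add: algebra_simps)
    qed
  qed
  thus ?thesis by blast
qed

lemma subexp_mult:
  assumes "subexp u" "subexp v" "\<And>N. 0 \<le> u N" "\<And>N. 0 \<le> v N"
  shows "subexp (\<lambda>N. u N * v N)"
  unfolding subexp_def
proof (intro allI impI)
  fix \<theta> :: real assume th: "\<theta> > 1"
  have s: "sqrt \<theta> > 1" using th by simp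
  obtain C1 where C1: "\<And>N. u N \<le> C1 * sqrt \<theta>^N" using assms(1) s unfolding subexp_def by blast
  obtain C2 where C2: "\<And>N. v N \<le> C2 * sqrt \<theta>^N" using assms(2) s unfolding subexp_def by blast
  have "u N * v N \<le> (C1 * C2) * \<theta>^N" for N
  proof -
    have "u N * v N \<le> (C1 * sqrt \<theta>^N) * (C2 * sqrt \<theta>^N)"
      by (intro mult_mono C1 C2 assms(3,4)) (use C1[of N] assms(3)[of N] in linarith)
    also have "\<dots> = (C1 * C2) * (sqrt \<theta>^N * sqrt \<theta>^N)" by (simp add: algebra_simps)
    also have "sqrt \<theta>^N * sqrt \<theta>^N = (sqrt \<theta> * sqrt \<theta>)^N" by (simp only: power_mult_distrib)
    also have "sqrt \<theta> * sqrt \<theta> = \<theta>" using th by simp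
    finally show ?thesis .
  qed
  thus "\<exists>C. \<forall>N. u N * v N \<le> C * \<theta>^N" by blast
qed

lemma subexp_prod:
  assumes "finite J" "\<And>j. j \<in> J \<Longrightarrow> subexp (f j)" "\<And>j N. j \<in> J \<Longrightarrow> 0 \<le> f j N"
  shows "subexp (\<lambda>N. \<Prod>j\<in>J. f j N)"
  using assms
proof (induction J rule: finite_induct)
  case empty
  show ?case unfolding subexp_def by (auto intro!: exI[of _ 1])
next
  case (insert j J)
  have "subexp (\<lambda>N. f j N * (\<Prod>j\<in>J. f j N))"
    using insert by (intro subexp_mult) (auto intro: prod_nonneg)
  thus ?case using insert by simp
qed

lemma subexp_ratio:
  assumes u0: "\<And>N. 0 \<le> u N" and ev: "\<And>\<theta>. \<theta> > 1 \<Longrightarrow> \<exists>N0. \<forall>N\<ge>N0. u (Suc N) \<le> \<theta> * u N"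
  shows "subexp u"
  unfolding subexp_def
proof (intro allI impI)
  fix \<theta> :: real assume "\<theta> > 1"
  then obtain N0 where "\<forall>N\<ge>N0. u (Suc N) \<le> \<theta> * u N" using ev by blast
  thus "\<exists>C. \<forall>N. u N \<le> C * \<theta>^N" using \<open>\<theta> > 1\<close> by (intro ratio_bound[OF u0]) auto
qed

lemma subexp_lin: "subexp (\<lambda>N. real N + 1)"
proof (rule subexp_ratio)
  fix \<theta> :: real assume th: "\<theta> > 1"
  obtain N0 :: nat where N0: "real N0 \<ge> 1 / (\<theta> - 1)" using real_arch_simple by blast
  have "real (Suc N) + 1 \<le> \<theta> * (real N + 1)" if "N \<ge> N0" for N
  proof -
    have "1 / (\<theta> - 1) \<le> real N" using N0 that by linarith
    hence "1 \<le> real N * (\<theta> - 1)" using th by (simp add: divide_le_eq mult.commute)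
    thus ?thesis using th by (simp add: algebra_simps)
  qed
  thus "\<exists>N0. \<forall>N\<ge>N0. real (Suc N) + 1 \<le> \<theta> * (real N + 1)" by blast
qed auto

lemma subexp_poly: "subexp (\<lambda>N. (real N + 1)^d)"
proof -
  have "subexp (\<lambda>N. \<Prod>j\<in>{..<d}. real N + 1)"
    by (intro subexp_prod subexp_lin) auto
  thus ?thesis by simp
qed

lemma poch_nonneg0: "0 \<le> (x::real) \<Longrightarrow> 0 \<le> pochhammer x n"
  unfolding pochhammer_prod by (auto intro!: prod_nonneg)

lemma norm_poch_le: "norm (pochhammer (a::complex) N) \<le> pochhammer (norm a) N"
  unfolding pochhammer_prod
  by (auto simp: prod_norm[symmetric] intro!: prod_mono norm_triangle_le)

lemma subexp_poch_up: "subexp (\<lambda>N. norm (pochhammer (a::complex) N) / fact N)"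
proof -
  define A where "A = norm a"
  have "subexp (\<lambda>N. pochhammer A N / fact N)"
  proof (rule subexp_ratio)
    fix \<theta> :: real assume th: "\<theta> > 1"
    obtain N0 :: nat where N0: "real N0 \<ge> A / (\<theta> - 1)" using real_arch_simple by blast
    have "pochhammer A (Suc N) / fact (Suc N) \<le> \<theta> * (pochhammer A N / fact N)" if "N \<ge> N0" for N
    proof -
      have "A / (\<theta> - 1) \<le> real N" using N0 that by linarith
      hence "A \<le> real N * (\<theta> - 1)" using th by (simp add: divide_le_eq mult.commute)
      hence le: "A + real N \<le> \<theta> * (real N + 1)" using th by (simp add: algebra_simps)
      have "pochhammer A (Suc N) / fact (Suc N) = (pochhammer A N / fact N) * ((A + real N) / (real N + 1))"
        by (simp add: pochhammer_Suc field_simps)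
      also have "\<dots> \<le> (pochhammer A N / fact N) * \<theta>"
      proof (rule mult_left_mono)
        show "(A + real N) / (real N + 1) \<le> \<theta>" using le by (simp add: divide_le_eq)
        show "0 \<le> pochhammer A N / fact N" by (auto simp: A_def intro!: divide_nonneg_nonneg poch_nonneg0)
      qed
      finally show ?thesis by (simp add: mult.commute)
    qed
    thus "\<exists>N0. \<forall>N\<ge>N0. pochhammer A (Suc N) / fact (Suc N) \<le> \<theta> * (pochhammer A N / fact N)" by blast
  qed (auto simp: A_def poch_nonneg0)
  thus ?thesis unfolding subexp_def
    by (smt (verit, best) A_def divide_right_mono fact_ge_zero norm_poch_le)
qed

lemma subexp_poch_low:
  assumes nz: "\<And>n. pochhammer (b::complex) n \<noteq> 0"
  shows "subexp (\<lambda>N. fact N / norm (pochhammer b N))"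
proof (rule subexp_ratio)
  fix \<theta> :: real assume th: "\<theta> > 1"
  obtain N0 :: nat where N0: "real N0 \<ge> (\<theta> * norm b + 1) / (\<theta> - 1)" using real_arch_simple by blast
  have "fact (Suc N) / norm (pochhammer b (Suc N)) \<le> \<theta> * (fact N / norm (pochhammer b N))" if "N \<ge> N0" for N
  proof -
    have "(\<theta> * norm b + 1) / (\<theta> - 1) \<le> real N" using N0 that by linarith
    hence "\<theta> * norm b + 1 \<le> real N * (\<theta> - 1)" using th by (simp add: divide_le_eq mult.commute)
    hence le1: "real N + 1 \<le> \<theta> * (real N - norm b)" by (simp add: algebra_simps)
    have "real N - norm b \<le> norm (b + of_nat N)"
      using norm_triangle_ineq2[of "of_nat N" "-b"] by (simp add: add.commute)
    hence le: "real N + 1 \<le> \<theta> * norm (b + of_nat N)"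
      using le1 th by (smt (verit, best) mult_left_mono)
    have pos: "norm (b + of_nat N) > 0"
      using nz[of "Suc N"] by (auto simp: pochhammer_Suc)
    have pN: "norm (pochhammer b N) > 0" using nz[of N] by simp
    have "fact (Suc N) / norm (pochhammer b (Suc N)) = (fact N / norm (pochhammer b N)) * ((real N + 1) / norm (b + of_nat N))"
      unfolding pochhammer_Suc norm_mult using pos pN by (simp add: field_simps)
    also have "\<dots> \<le> (fact N / norm (pochhammer b N)) * \<theta>"
      using le pos pN by (intro mult_left_mono) (auto simp: divide_le_eq mult.commute)
    finally show ?thesis by (simp add: mult.commute)
  qed
  thus "\<exists>N0. \<forall>N\<ge>N0. fact (Suc N) / norm (pochhammer b (Suc N)) \<le> \<theta> * (fact N / norm (pochhammer b N))" by blast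
qed auto

lemma binom_term_le:
  fixes x y :: real
  assumes "0 \<le> x" "0 \<le> y"
  shows "real (m choose j) * x^j * y^(m-j) \<le> (x+y)^m"
proof (cases "j \<le> m")
  case True
  have "real (m choose j) * x^j * y^(m-j) \<le> (\<Sum>i\<le>m. real (m choose i) * x^i * y^(m-i))"
    by (rule member_le_sum[of j "{..m}" "\<lambda>i. real (m choose i) * x^i * y^(m-i)"]) (use True assms in auto)
  also have "\<dots> = (x+y)^m" by (rule binomial_ring[symmetric])
  finally show ?thesis .
next
  case False thus ?thesis using assms by (simp add: binomial_eq_0)
qed

lemma multinom_le:
  fixes y :: "'k \<Rightarrow> real" and n :: "'k \<Rightarrow> nat"
  assumes "finite K" "\<And>k. k \<in> K \<Longrightarrow> 0 \<le> y k"
  shows "fact (\<Sum>k\<in>K. n k) * (\<Prod>k\<in>K. y k ^ n k) \<le> (\<Sum>k\<in>K. y k)^(\<Sum>k\<in>K. n k) * (\<Prod>k\<in>K. fact (n k))"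
  using assms
proof (induction K rule: finite_induct)
  case empty thus ?case by simp
next
  case (insert k K)
  define A where "A = (\<Sum>k\<in>K. n k)"
  define S where "S = (\<Sum>k\<in>K. y k)"
  define P where "P = (\<Prod>k\<in>K. y k ^ n k)"
  define F where "F = (\<Prod>k\<in>K. fact (n k) :: real)"
  define a where "a = n k"
  have y0: "0 \<le> y k" using insert by auto
  have S0: "0 \<le> S" unfolding S_def using insert by (auto intro: sum_nonneg)
  have P0: "0 \<le> P" unfolding P_def using insert by (auto intro: prod_nonneg)
  have IH: "fact A * P \<le> S^A * F" using insert by (simp add: A_def P_def S_def F_def)
  have "fact a * fact A * ((a+A) choose a) = (fact (a+A) :: nat)"
    using binomial_fact_lemma[of a "a+A"] by simp
  hence "real (fact a * fact A * ((a+A) choose a)) = real (fact (a+A))" by (simp only:)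
  hence fl: "fact (a + A) = real ((a + A) choose a) * fact a * fact A"
    by (simp add: algebra_simps)
  have "fact (a + A) * (y k ^ a * P) = real ((a + A) choose a) * fact a * y k ^ a * (fact A * P)"
    unfolding fl by (simp add: algebra_simps)
  also have "\<dots> \<le> real ((a + A) choose a) * fact a * y k ^ a * (S^A * F)"
    by (intro mult_left_mono IH) (auto simp: y0)
  also have "\<dots> = (real ((a + A) choose a) * y k ^ a * S^((a+A) - a)) * (fact a * F)"
    by (simp add: algebra_simps)
  also have "\<dots> \<le> (y k + S)^(a+A) * (fact a * F)"
    by (intro mult_right_mono binom_term_le) (auto simp: y0 S0 F_def intro!: mult_nonneg_nonneg prod_nonneg)
  finally show ?case using insert by (simp add: A_def P_def S_def F_def a_def algebra_simps)
qed

lemma powr_inv_pow: "0 \<le> (r::real) \<Longrightarrow> p \<ge> 1 \<Longrightarrow> (r powr (1/real p))^p = r"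
proof (cases "r = 0")
  case False
  assume r: "0 \<le> r" and p: "p \<ge> 1"
  hence "r > 0" using False by simp
  hence "(r powr (1/real p))^p = (r powr (1/real p)) powr (real p)" by (simp add: powr_realpow)
  also have "\<dots> = r" using p \<open>r > 0\<close> by (simp add: powr_powr)
  finally show ?thesis .
qed simp

lemma geom_prod_summable:
  assumes "0 \<le> \<rho>" "\<rho> < (1::real)"
  shows "(\<lambda>n::'m::finite \<Rightarrow> nat. \<rho>^(deg n)) summable_on UNIV"
proof -
  have g: "(\<lambda>j::nat. norm (\<rho>^j)) summable_on UNIV"
    using assms by (subst summable_on_UNIV_nonneg_real_iff) (auto simp: summable_geometric)
  have "Infinite_Set_Sum.abs_summable_on (\<lambda>g::'m \<Rightarrow> nat. \<Prod>x\<in>UNIV. \<rho>^(g x)) (PiE UNIV (\<lambda>_. UNIV))"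
    by (rule abs_summable_on_prod_PiE) (use abs_summable_equivalent[THEN iffD1, OF g] in auto)
  hence "(\<lambda>g::'m \<Rightarrow> nat. norm (\<Prod>x\<in>UNIV. \<rho>^(g x))) summable_on (PiE UNIV (\<lambda>_. UNIV))"
    by (rule abs_summable_equivalent[THEN iffD2])
  hence "(\<lambda>g::'m \<Rightarrow> nat. norm (\<Prod>x\<in>UNIV. \<rho>^(g x))) summable_on UNIV"
    by (simp add: PiE_UNIV_domain)
  moreover have "norm (\<Prod>x\<in>UNIV. \<rho>^(g x)) = \<rho>^(deg g)" for g :: "'m \<Rightarrow> nat"
    using assms by (simp add: deg_def power_sum abs_prod)
  ultimately show ?thesis by simp
qed

definition fcoef :: "nat \<Rightarrow> (nat \<Rightarrow> complex) \<Rightarrow> (nat \<Rightarrow> 'm::finite \<Rightarrow> complex) \<Rightarrow> ('m \<Rightarrow> nat) \<Rightarrow> complex" where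
  "fcoef p a b n = (\<Prod>i\<in>{1..p}. pochhammer (a i) (deg n)) /
      (\<Prod>k\<in>UNIV. (\<Prod>j\<in>{1..<p}. pochhammer (b j k) (n k)) * fact (n k))"

lemma FC_PS: "FC p a b = PS (fcoef p a b)"
  by (auto simp: FC_def PS_def fcoef_def mon_def deg_def fun_eq_iff)

lemma fcoef_good:
  fixes b :: "nat \<Rightarrow> 'm::finite \<Rightarrow> complex"
  assumes p: "p \<ge> 1" and nz: "\<And>j k m. j \<in> {1..<p} \<Longrightarrow> pochhammer (b j k) m \<noteq> 0"
  shows "good p (fcoef p a b)"
  unfolding good_def
proof (intro ballI allI)
  fix r :: "'m \<Rightarrow> real" and d :: nat
  assume r: "r \<in> Reg p"
  have r0: "\<And>k. 0 \<le> r k" using r by (auto simp: Reg_def)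
  define y where "y k = r k powr (1/real p)" for k
  define \<sigma> where "\<sigma> = (\<Sum>k\<in>UNIV. y k)"
  have y0: "\<And>k. 0 \<le> y k" by (simp add: y_def)
  have \<sigma>1: "\<sigma> < 1" using r by (simp add: Reg_def \<sigma>_def y_def)
  have \<sigma>0: "0 \<le> \<sigma>" unfolding \<sigma>_def by (intro sum_nonneg y0)
  have ry: "\<And>k. r k = y k ^ p" using powr_inv_pow[OF r0 p] by (simp add: y_def)
  define q where "q = \<sigma> ^ p"
  have q0: "0 \<le> q" using \<sigma>0 by (simp add: q_def)
  have q1: "q < 1" using \<sigma>0 \<sigma>1 p unfolding q_def using power_strict_mono[of \<sigma> 1 p] by simp
  define \<theta> where "\<theta> = sqrt (2 / (1 + q))"
  have th1: "\<theta> > 1" using q0 q1 by (simp add: \<theta>_def)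
  have th2: "\<theta>^2 = 2/(1+q)" using q0 by (simp add: \<theta>_def)
  define \<rho> where "\<rho> = \<theta>^2 * q"
  have \<rho>0: "0 \<le> \<rho>" using q0 by (simp add: \<rho>_def)
  have \<rho>1: "\<rho> < 1" using q0 q1 by (simp add: \<rho>_def th2 divide_less_eq)
  define U where "U N = (real N + 1)^d * (\<Prod>i\<in>{1..p}. norm (pochhammer (a i) N) / fact N)" for N
  have "subexp U" unfolding U_def
    by (rule subexp_mult[OF subexp_poly subexp_prod]) (auto intro!: prod_nonneg subexp_poch_up)
  then obtain C1 where C1: "\<And>N. U N \<le> C1 * \<theta>^N" using th1 unfolding subexp_def by blast
  define V where "V k m = (\<Prod>j\<in>{1..<p}. fact m / norm (pochhammer (b j k) m))" for k m
  have "\<exists>C. \<forall>m. V k m \<le> C * \<theta>^m" for k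
  proof -
    have "subexp (V k)" unfolding V_def
      by (rule subexp_prod) (auto intro!: subexp_poch_low nz)
    thus ?thesis using th1 unfolding subexp_def by blast
  qed
  then obtain C2 where C2: "\<And>k m. V k m \<le> C2 k * \<theta>^m" by metis
  have V0: "0 \<le> V k m" for k m unfolding V_def by (auto intro!: prod_nonneg)
  have C20: "0 \<le> C2 k" for k using C2[of k 0] V0[of k 0] by simp
  define C where "C = C1 * (\<Prod>k\<in>UNIV. C2 k)"
  have key: "(real (deg n) + 1)^d * (norm (fcoef p a b n) * rmon r n) \<le> C * \<rho>^(deg n)" for n
  proof -
    define N where "N = deg n"
    define PA where "PA = (\<Prod>i\<in>{1..p}. norm (pochhammer (a i) N))"
    define PB where "PB = (\<Prod>k\<in>UNIV. \<Prod>j\<in>{1..<p}. norm (pochhammer (b j k) (n k)))"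
    define FK where "FK = (\<Prod>k\<in>UNIV. fact (n k) :: real)"
    define F where "F = (fact N :: real)"
    define Y where "Y = (\<Prod>k\<in>UNIV. y k ^ n k)"
    have PB0: "PB > 0" unfolding PB_def using nz by (auto intro!: prod_pos)
    have FK0: "FK > 0" unfolding FK_def by (auto intro!: prod_pos)
    have F0: "F > 0" by (simp add: F_def)
    have Y0: "Y \<ge> 0" unfolding Y_def using y0 by (auto intro!: prod_nonneg)
    have e1: "norm (fcoef p a b n) = PA / (PB * FK)"
      by (simp add: fcoef_def PA_def PB_def FK_def N_def norm_divide norm_mult prod.distrib
            flip: prod_norm)
    have e2: "U N = (real N + 1)^d * (PA / F^p)"
      by (simp add: U_def PA_def F_def prod_dividef)
    have e3: "(\<Prod>k\<in>UNIV. V k (n k)) = FK^(p-1) / PB"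
      by (simp add: V_def PB_def FK_def prod_dividef prod_power_distrib)
    have e4: "rmon r n = Y^p"
    proof -
      have "\<And>k. (y k ^ p)^(n k) = (y k ^ n k)^p" by (simp add: mult.commute flip: power_mult)
      thus ?thesis by (simp add: rmon_def Y_def ry prod_power_distrib)
    qed
    have m1: "F * Y \<le> \<sigma>^N * FK"
      using multinom_le[of UNIV y n] y0 by (simp add: F_def Y_def \<sigma>_def FK_def N_def deg_def)
    have m2: "F * Y / FK \<le> \<sigma>^N" using m1 FK0 by (simp add: divide_le_eq)
    have FKp: "FK^p = FK^(p-1) * FK" using p by (metis One_nat_def Suc_diff_le diff_Suc_1 mult.commute power_Suc)
    have id: "(real N + 1)^d * (PA/(PB*FK)) * Y^p = ((real N + 1)^d * (PA / F^p)) * (FK^(p-1)/PB) * ((F * Y / FK)^p)"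
      using PB0 FK0 F0 by (simp add: power_divide power_mult_distrib FKp field_simps)
    have W: "(\<Prod>k\<in>UNIV. V k (n k)) \<le> (\<Prod>k\<in>UNIV. C2 k) * \<theta>^N"
    proof -
      have "(\<Prod>k\<in>UNIV. V k (n k)) \<le> (\<Prod>k\<in>UNIV. C2 k * \<theta>^(n k))"
        by (intro prod_mono) (auto simp: V0 C2)
      also have "\<dots> = (\<Prod>k\<in>UNIV. C2 k) * \<theta>^N"
        by (simp add: prod.distrib N_def deg_def power_sum)
      finally show ?thesis .
    qed
    have "(real N + 1)^d * (norm (fcoef p a b n) * rmon r n) = U N * (\<Prod>k\<in>UNIV. V k (n k)) * ((F * Y / FK)^p)"
      unfolding e1 e2 e3 e4 using id by (simp add: mult.assoc)
    also have "\<dots> \<le> (C1 * \<theta>^N) * ((\<Prod>k\<in>UNIV. C2 k) * \<theta>^N) * ((\<sigma>^N)^p)"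
    proof -
      have U0: "0 \<le> U N" unfolding U_def by (intro mult_nonneg_nonneg prod_nonneg) auto
      have P0: "0 \<le> (\<Prod>k\<in>UNIV. V k (n k))" by (auto intro!: prod_nonneg V0)
      have C1p: "0 \<le> C1 * \<theta>^N" using U0 C1[of N] by linarith
      have D0: "0 \<le> F * Y / FK" using F0 Y0 FK0 by simp
      have d1: "(F * Y / FK)^p \<le> (\<sigma>^N)^p" by (rule power_mono[OF m2 D0])
      have ab: "U N * (\<Prod>k\<in>UNIV. V k (n k)) \<le> (C1 * \<theta>^N) * ((\<Prod>k\<in>UNIV. C2 k) * \<theta>^N)"
        by (rule mult_mono[OF C1 W C1p P0])
      show ?thesis
      proof (rule mult_mono[OF ab d1])
        show "0 \<le> C1 * \<theta>^N * ((\<Prod>k\<in>UNIV. C2 k) * \<theta>^N)"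
          using C1p C20 th1 by (intro mult_nonneg_nonneg[OF C1p] mult_nonneg_nonneg prod_nonneg) auto
      qed (use D0 in auto)
    qed
    also have "\<dots> = C * \<rho>^N"
      by (simp add: C_def \<rho>_def q_def power_mult_distrib algebra_simps flip: power_mult)
         (simp add: power2_eq_square power_mult_distrib mult.commute power_mult)
    finally show ?thesis by (simp add: N_def)
  qed
  have "(\<lambda>n. C * \<rho>^(deg n)) summable_on UNIV"
    by (rule summable_on_cmult_right[OF geom_prod_summable[OF \<rho>0 \<rho>1]])
  thus "(\<lambda>n. (real (deg n) + 1)^d * (norm (fcoef p a b n) * rmon r n)) summable_on UNIV"
    by (rule summable_on_comparison_test) (auto intro!: key mult_nonneg_nonneg rmon_nonneg r0)
qed


definition polyb :: "(('m::finite \<Rightarrow> nat) \<Rightarrow> complex) \<Rightarrow> bool" where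
  "polyb f \<longleftrightarrow> (\<exists>C\<ge>0. \<exists>e. \<forall>n. norm (f n) \<le> C * (real (deg n) + 1)^e)"

lemma polyb_const: "polyb (\<lambda>n. c)"
  unfolding polyb_def by (rule exI[of _ "norm c"]) (auto intro!: exI[of _ 0])

lemma nk_le: "real (n k) \<le> real (deg n) + 1"
  using deg_ge[of n k] by linarith

lemma polyb_nk: "polyb (\<lambda>n. of_nat (n k))"
  unfolding polyb_def
  by (rule exI[of _ 1]) (auto intro!: exI[of _ 1] simp: nk_le)

lemma polyb_deg: "polyb (\<lambda>n. of_nat (deg n))"
  unfolding polyb_def by (rule exI[of _ 1]) (auto intro!: exI[of _ 1])

lemma pow_mono_exp: "(real (deg n) + 1)^e \<le> (real (deg n) + 1)^(e + e')"
  by (rule power_increasing) auto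

lemma polyb_add:
  assumes "polyb f" "polyb g" shows "polyb (\<lambda>n. f n + g n)"
proof -
  obtain C1 e1 where 1: "C1 \<ge> 0" "\<And>n. norm (f n) \<le> C1 * (real (deg n) + 1)^e1" using assms(1) polyb_def by blast
  obtain C2 e2 where 2: "C2 \<ge> 0" "\<And>n. norm (g n) \<le> C2 * (real (deg n) + 1)^e2" using assms(2) polyb_def by blast
  have "norm (f n + g n) \<le> (C1 + C2) * (real (deg n) + 1)^(e1+e2)" for n
  proof -
    have "norm (f n + g n) \<le> C1 * (real (deg n) + 1)^e1 + C2 * (real (deg n) + 1)^e2"
      using 1 2 norm_triangle_ineq[of "f n" "g n"] by (smt (verit))
    also have "\<dots> \<le> C1 * (real (deg n) + 1)^(e1+e2) + C2 * (real (deg n) + 1)^(e1+e2)"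
      using 1 2 pow_mono_exp[of n e1 e2] pow_mono_exp[of n e2 e1]
      by (intro add_mono mult_left_mono) (auto simp: add.commute)
    finally show ?thesis by (simp add: algebra_simps)
  qed
  thus ?thesis unfolding polyb_def using 1 2 by (intro exI[of _ "C1+C2"]) auto
qed

lemma polyb_mult:
  assumes "polyb f" "polyb g" shows "polyb (\<lambda>n. f n * g n)"
proof -
  obtain C1 e1 where 1: "C1 \<ge> 0" "\<And>n. norm (f n) \<le> C1 * (real (deg n) + 1)^e1" using assms(1) polyb_def by blast
  obtain C2 e2 where 2: "C2 \<ge> 0" "\<And>n. norm (g n) \<le> C2 * (real (deg n) + 1)^e2" using assms(2) polyb_def by blast
  have "norm (f n * g n) \<le> (C1 * C2) * (real (deg n) + 1)^(e1+e2)" for n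
  proof -
    have "norm (f n * g n) \<le> (C1 * (real (deg n) + 1)^e1) * (C2 * (real (deg n) + 1)^e2)"
      unfolding norm_mult by (intro mult_mono 1 2) (use 1 in auto)
    thus ?thesis by (simp add: power_add algebra_simps)
  qed
  thus ?thesis unfolding polyb_def using 1 2 by (intro exI[of _ "C1*C2"]) auto
qed

lemma polyb_prod_list: "(\<And>j. polyb (f j)) \<Longrightarrow> polyb (\<lambda>n. \<Prod>j\<leftarrow>js. f j n)"
  by (induction js) (auto intro: polyb_mult polyb_const)

lemma polyb_sum: "finite A \<Longrightarrow> (\<And>j. polyb (f j)) \<Longrightarrow> polyb (\<lambda>n. \<Sum>j\<in>A. f j n)"
  by (induction A rule: finite_induct) (auto intro: polyb_add polyb_const)

lemma good_polyb: "good p c \<Longrightarrow> polyb f \<Longrightarrow> good p (\<lambda>n. f n * c n)"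
  unfolding polyb_def using good_poly by blast

lemma good_summable: "good p c \<Longrightarrow> x \<in> domD p \<Longrightarrow> (\<lambda>n. c n * mon x n) summable_on UNIV"
  by (rule abs_summable_summable) (rule good_summ)

lemma PS_add:
  assumes "good p c" "good p d" "x \<in> domD p"
  shows "PS (\<lambda>n. c n + d n) x = PS c x + PS d x"
  unfolding PS_def using good_summable[OF assms(1,3)] good_summable[OF assms(2,3)]
  by (simp add: distrib_right infsum_add)

lemma PS_cmult: "PS (\<lambda>n. \<alpha> * c n) x = \<alpha> * PS c x"
  unfolding PS_def by (simp add: mult.assoc infsum_cmult_right')

lemma good_add:
  assumes "good p c" "good p d" shows "good p (\<lambda>n. c n + d n)"
  unfolding good_def
proof (intro ballI allI)
  fix r :: "'a \<Rightarrow> real" and e assume r: "r \<in> Reg p"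
  have r0: "\<And>k. 0 \<le> r k" using r by (auto simp: Reg_def)
  have "(\<lambda>n. (real (deg n) + 1)^e * (norm (c n) * rmon r n) + (real (deg n) + 1)^e * (norm (d n) * rmon r n)) summable_on UNIV"
    using assms r unfolding good_def by (intro summable_on_add) auto
  thus "(\<lambda>n. (real (deg n) + 1)^e * (norm (c n + d n) * rmon r n)) summable_on UNIV"
  proof (rule summable_on_comparison_test)
    fix n
    have "norm (c n + d n) * rmon r n \<le> norm (c n) * rmon r n + norm (d n) * rmon r n"
      using norm_triangle_ineq[of "c n" "d n"] rmon_nonneg[of r n, OF r0]
      by (simp add: distrib_right[symmetric] mult_right_mono)
    thus "(real (deg n) + 1)^e * (norm (c n + d n) * rmon r n) \<le>
       (real (deg n) + 1)^e * (norm (c n) * rmon r n) + (real (deg n) + 1)^e * (norm (d n) * rmon r n)"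
      by (simp add: distrib_left[symmetric] mult_left_mono)
    show "0 \<le> (real (deg n) + 1)^e * (norm (c n + d n) * rmon r n)"
      by (intro mult_nonneg_nonneg rmon_nonneg r0) auto
  qed
qed

lemma good_zero: "good p (\<lambda>n. 0)"
  by (simp add: good_def)

lemma good_sum: "finite A \<Longrightarrow> (\<And>j. j \<in> A \<Longrightarrow> good p (c j)) \<Longrightarrow> good p (\<lambda>n. \<Sum>j\<in>A. c j n)"
  by (induction A rule: finite_induct) (auto intro: good_add good_zero)

lemma PS_sum:
  assumes "finite A" "\<And>j. j \<in> A \<Longrightarrow> good p (c j)" "x \<in> domD p"
  shows "PS (\<lambda>n. \<Sum>j\<in>A. c j n) x = (\<Sum>j\<in>A. PS (c j) x)"
  using assms
proof (induction A rule: finite_induct)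
  case empty thus ?case by (simp add: PS_def)
next
  case (insert j A)
  have "PS (\<lambda>n. \<Sum>j\<in>insert j A. c j n) x = PS (\<lambda>n. c j n + (\<Sum>j\<in>A. c j n)) x"
    using insert by simp
  also have "\<dots> = PS (c j) x + PS (\<lambda>n. \<Sum>j\<in>A. c j n) x"
    using insert by (intro PS_add good_sum) auto
  finally show ?case using insert by simp
qed

lemma upd_cont: "continuous_on UNIV (\<lambda>z. upd x k z)"
  unfolding upd_def
  apply (intro continuous_on_vec_lambda)
  subgoal for i by (cases "i = k") auto
  done

lemma isCont_upd: "isCont (\<lambda>z. upd x k z) z0"
  using upd_cont continuous_on_eq_continuous_at open_UNIV by blast

lemma exp_eq_small:
  fixes w z :: complex
  assumes "exp w = exp z" "norm (w - z) < 1"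
  shows "w = z"
proof -
  obtain n :: int where n: "w = z + (of_int (2 * n) * pi) * \<i>" using assms(1) exp_eq by blast
  have nn: "norm (w - z) = 2 * \<bar>real_of_int n\<bar> * pi" by (simp add: n norm_mult)
  have "n = 0"
  proof (rule ccontr)
    assume "n \<noteq> 0"
    hence "\<bar>real_of_int n\<bar> \<ge> 1" by linarith
    hence "2 * \<bar>real_of_int n\<bar> * pi \<ge> 2 * 1 * pi" by (intro mult_right_mono mult_left_mono) auto
    thus False using assms(2) nn pi_gt3 by linarith
  qed
  thus ?thesis using n by simp
qed

locale hsetup =
  fixes p :: nat and U :: "(complex^'m::finite) set" and L :: "'m \<Rightarrow> complex^'m \<Rightarrow> complex"
  assumes p: "p \<ge> 1" and Uo: "open U" and UD: "U \<subseteq> domD p"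
    and Unz: "\<And>x k. x \<in> U \<Longrightarrow> x$k \<noteq> 0"
    and Lc: "\<And>k. continuous_on U (L k)" and Lexp: "\<And>k x. x \<in> U \<Longrightarrow> exp (L k x) = x$k"
begin

definition E :: "('m \<Rightarrow> complex) \<Rightarrow> complex^'m \<Rightarrow> complex" where
  "E \<mu> x = (\<Prod>k\<in>UNIV. exp (\<mu> k * L k x))"
definition G :: "('m \<Rightarrow> complex) \<Rightarrow> (('m \<Rightarrow> nat) \<Rightarrow> complex) \<Rightarrow> complex^'m \<Rightarrow> complex" where
  "G \<mu> c x = E \<mu> x * PS c x"

definition Sx where "Sx x k = (\<lambda>z. upd x k z) -` U"

lemma Sx_open: "open (Sx x k)"
  unfolding Sx_def by (rule open_vimage[OF Uo upd_cont])

lemma Sx_mem: "x \<in> U \<Longrightarrow> x$k \<in> Sx x k"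
  by (simp add: Sx_def upd_same)

lemma ev_upd_U: "x \<in> U \<Longrightarrow> eventually (\<lambda>z. upd x k z \<in> U) (nhds (x$k))"
  unfolding eventually_nhds
  by (rule exI[of _ "Sx x k"]) (auto simp: Sx_open Sx_mem, auto simp: Sx_def)

lemma L_line_cont: "x \<in> U \<Longrightarrow> isCont (\<lambda>z. L l (upd x k z)) (x$k)"
proof -
  assume x: "x \<in> U"
  have "continuous_on (Sx x k) (\<lambda>z. L l (upd x k z))"
    by (rule continuous_on_compose2[OF Lc upd_cont[THEN continuous_on_subset]]) (auto simp: Sx_def)
  thus ?thesis using Sx_open Sx_mem[OF x] continuous_on_eq_continuous_at by blast
qed

lemma ev_nhds_of_at: "eventually P (at a) \<Longrightarrow> P a \<Longrightarrow> eventually P (nhds a)"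
  unfolding eventually_at_filter by (erule eventually_mono) (metis UNIV_I)

lemma L_line_const:
  assumes x: "x \<in> U" and lk: "l \<noteq> k"
  shows "eventually (\<lambda>z. L l (upd x k z) = L l x) (nhds (x$k))"
proof -
  have "((\<lambda>z. L l (upd x k z)) \<longlongrightarrow> L l x) (at (x$k))"
    using L_line_cont[OF x, where l=l and k=k] by (simp add: isCont_def upd_same)
  hence "eventually (\<lambda>z. dist (L l (upd x k z)) (L l x) < 1) (at (x$k))"
    by (rule tendstoD) simp
  hence e1: "eventually (\<lambda>z. dist (L l (upd x k z)) (L l x) < 1) (nhds (x$k))"
    by (rule ev_nhds_of_at) (simp add: upd_same)
  show ?thesis
    using e1 ev_upd_U[OF x, of k]
  proof eventually_elim
    case (elim z)
    have "exp (L l (upd x k z)) = exp (L l x)"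
      using Lexp[OF elim(2)] Lexp[OF x] lk by (simp add: upd_nth)
    thus ?case using elim(1) exp_eq_small by (simp add: dist_norm)
  qed
qed

lemma L_line_deriv:
  assumes x: "x \<in> U"
  shows "((\<lambda>z. L k (upd x k z)) has_field_derivative inverse (x$k)) (at (x$k))"
proof -
  have "((\<lambda>z. L k (upd x k z)) has_field_derivative inverse (exp (L k (upd x k (x$k))))) (at (x$k))"
  proof (rule has_field_derivative_inverse_basic[where f=exp and t="Sx x k"])
    show "(exp has_field_derivative exp (L k (upd x k (x$k)))) (at (L k (upd x k (x$k))))"
      by (rule DERIV_exp)
    show "exp (L k (upd x k (x$k))) \<noteq> 0" by simp
    show "continuous (at (x$k)) (\<lambda>z. L k (upd x k z))" using L_line_cont[OF x] by simp
    show "open (Sx x k)" by (rule Sx_open)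
    show "x$k \<in> Sx x k" by (rule Sx_mem[OF x])
    show "\<And>z. z \<in> Sx x k \<Longrightarrow> exp (L k (upd x k z)) = z"
      by (auto simp: Sx_def Lexp upd_nth)
  qed
  thus ?thesis using Lexp[OF x] by (simp add: upd_same)
qed

lemma E_deriv:
  assumes x: "x \<in> U"
  shows "((\<lambda>z. E \<mu> (upd x k z)) has_field_derivative E \<mu> x * \<mu> k * inverse (x$k)) (at (x$k))"
proof -
  define Q where "Q = (\<Prod>l\<in>-{k}. exp (\<mu> l * L l x))"
  have ev: "eventually (\<lambda>z. E \<mu> (upd x k z) = exp (\<mu> k * L k (upd x k z)) * Q) (nhds (x$k))"
  proof -
    have "eventually (\<lambda>z. \<forall>l\<in>-{k}. L l (upd x k z) = L l x) (nhds (x$k))"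
      by (rule eventually_ball_finite) (auto intro: L_line_const[OF x])
    thus ?thesis
    proof eventually_elim
      case (elim z)
      thus ?case unfolding E_def Q_def by (subst prod_split_k[of _ k]) (auto intro!: prod.cong)
    qed
  qed
  have "((\<lambda>z. exp (\<mu> k * L k (upd x k z)) * Q) has_field_derivative
          exp (\<mu> k * L k (upd x k (x$k))) * (\<mu> k * inverse (x$k)) * Q) (at (x$k))"
    by (auto intro!: derivative_eq_intros L_line_deriv[OF x])
  moreover have "E \<mu> x = exp (\<mu> k * L k (upd x k (x$k))) * Q"
    unfolding E_def Q_def upd_same by (rule prod_split_k)
  ultimately have "((\<lambda>z. exp (\<mu> k * L k (upd x k z)) * Q) has_field_derivative
          E \<mu> x * \<mu> k * inverse (x$k)) (at (x$k))" by (simp add: algebra_simps)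
  thus ?thesis using DERIV_cong_ev[OF refl ev refl] by simp
qed

lemma xU_D: "x \<in> U \<Longrightarrow> x \<in> domD p"
  using UD by auto

lemma G_theta:
  assumes g: "good p c" and x: "x \<in> U"
  shows "theta k (G \<mu> c) x = G \<mu> (\<lambda>n. (\<mu> k + of_nat (n k)) * c n) x"
proof -
  define D where "D = (\<Sum>\<^sub>\<infinity>n. c n * of_nat (n k) * mon x (n(k := n k - 1)))"
  have xD: "x \<in> domD p" by (rule xU_D[OF x])
  have dP: "((\<lambda>z. PS c (upd x k z)) has_field_derivative D) (at (x$k))"
    unfolding D_def by (rule PS_deriv(2)[OF g p xD])
  have tP: "x$k * D = PS (\<lambda>n. of_nat (n k) * c n) x"
    using PS_theta[OF g p xD, of k] DERIV_imp_deriv[OF dP] by (simp add: theta_def)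
  have "((\<lambda>z. E \<mu> (upd x k z) * PS c (upd x k z)) has_field_derivative
         E \<mu> x * \<mu> k * inverse (x$k) * PS c x + D * E \<mu> x) (at (x$k))"
    using DERIV_mult[OF E_deriv[OF x] dP] by (simp add: upd_same)
  hence "deriv (\<lambda>z. G \<mu> c (upd x k z)) (x$k) = E \<mu> x * \<mu> k * inverse (x$k) * PS c x + D * E \<mu> x"
    by (simp add: G_def DERIV_imp_deriv)
  hence "theta k (G \<mu> c) x = E \<mu> x * (\<mu> k * PS c x + x$k * D)"
    using Unz[OF x, of k] by (simp add: theta_def field_simps)
  also have "\<mu> k * PS c x + x$k * D = PS (\<lambda>n. \<mu> k * c n) x + PS (\<lambda>n. of_nat (n k) * c n) x"
    by (simp add: tP PS_cmult)
  also have "\<dots> = PS (\<lambda>n. \<mu> k * c n + of_nat (n k) * c n) x"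
    by (rule PS_add[symmetric]) (auto intro!: good_polyb[OF g] polyb_const polyb_nk xD)
  finally show ?thesis by (simp add: G_def[abs_def] distrib_right)
qed

end


lemma PS_shift:
  "x$k * PS c x = PS (\<lambda>n. if n k = 0 then 0 else c (n(k := n k - 1))) x"
proof -
  define h where "h = (\<lambda>n::'a \<Rightarrow> nat. n(k := n k + 1))"
  define g where "g = (\<lambda>n. (if n k = 0 then 0 else c (n(k := n k - 1))) * mon x n)"
  have inj: "inj h" unfolding h_def inj_def by (auto simp: fun_eq_iff split: if_splits)
  have "x$k * PS c x = (\<Sum>\<^sub>\<infinity>n. c n * (x$k * mon x n))"
    unfolding PS_def by (simp add: infsum_cmult_right'[symmetric] algebra_simps)
  also have "\<dots> = (\<Sum>\<^sub>\<infinity>n. g (h n))"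
  proof (rule infsum_cong)
    fix n
    have "x$k * mon x n = mon x (h n)"
      by (simp add: h_def mon_upd_fun mon_split[of x n k])
    thus "c n * (x$k * mon x n) = g (h n)"
      by (simp add: g_def h_def)
  qed
  also have "\<dots> = infsum g (range h)"
    using infsum_reindex[OF inj, of g] by (simp add: o_def)
  also have "\<dots> = infsum g UNIV"
  proof (rule infsum_cong_neutral)
    fix n assume "n \<in> UNIV - range h"
    hence "n k = 0"
    proof (cases "n k")
      case (Suc j)
      have "h (n(k := j)) = n" using Suc by (auto simp: h_def fun_eq_iff)
      thus ?thesis using \<open>n \<in> UNIV - range h\<close> by (metis DiffD2 rangeI)
    qed
    thus "g n = 0" by (simp add: g_def)
  qed auto
  finally show ?thesis by (simp add: PS_def g_def)
qed

context hsetup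
begin

lemma theta_cong:
  assumes x: "x \<in> U" and fg: "\<And>y. y \<in> U \<Longrightarrow> f y = g y"
  shows "theta k f x = theta k g x"
proof -
  have "eventually (\<lambda>z. f (upd x k z) = g (upd x k z)) (nhds (x$k))"
    using ev_upd_U[OF x, of k] by eventually_elim (rule fg)
  hence "deriv (\<lambda>z. f (upd x k z)) (x$k) = deriv (\<lambda>z. g (upd x k z)) (x$k)"
    by (rule deriv_cong_ev) simp
  thus ?thesis by (simp add: theta_def)
qed

lemma G_add:
  assumes "good p c" "good p d" "x \<in> U"
  shows "G \<mu> c x + G \<mu> d x = G \<mu> (\<lambda>n. c n + d n) x"
  using PS_add[OF assms(1,2) xU_D[OF assms(3)]] by (simp add: G_def distrib_left)

lemma G_cmult: "\<alpha> * G \<mu> c x = G \<mu> (\<lambda>n. \<alpha> * c n) x"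
  by (simp add: G_def PS_cmult)

lemma good_fac: "good p c \<Longrightarrow> good p (\<lambda>n. (\<alpha> + of_nat (n k)) * c n)"
  by (intro good_polyb polyb_add polyb_const polyb_nk)

lemma shift_theta_G:
  assumes g: "good p c" and fg: "\<And>y. y \<in> U \<Longrightarrow> f y = G \<mu> c y" and x: "x \<in> U"
  shows "shift_theta k \<beta> f x = G \<mu> (\<lambda>n. (\<beta> + \<mu> k + of_nat (n k)) * c n) x"
proof -
  have "shift_theta k \<beta> f x = \<beta> * G \<mu> c x + theta k (G \<mu> c) x"
    unfolding shift_theta_def using fg[OF x] theta_cong[OF x fg] by simp
  also have "\<dots> = G \<mu> (\<lambda>n. \<beta> * c n) x + G \<mu> (\<lambda>n. (\<mu> k + of_nat (n k)) * c n) x"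
    by (simp add: G_theta[OF g x] G_cmult)
  also have "\<dots> = G \<mu> (\<lambda>n. \<beta> * c n + (\<mu> k + of_nat (n k)) * c n) x"
    by (rule G_add) (auto intro: good_polyb[OF g] polyb_const good_fac[OF g] x)
  finally show ?thesis by (simp add: algebra_simps)
qed

lemma good_prodlist: "good p c \<Longrightarrow> good p (\<lambda>n. (\<Prod>j\<leftarrow>js. \<beta> j + of_nat (n k)) * c n)"
  by (intro good_polyb polyb_prod_list polyb_add polyb_const polyb_nk)

lemma fold_theta:
  assumes g: "good p c" and fg: "\<And>y. y \<in> U \<Longrightarrow> f y = G \<mu> c y"
  shows "\<forall>x\<in>U. foldr (\<lambda>j g. shift_theta k (\<beta> j) g) js f x
             = G \<mu> (\<lambda>n. (\<Prod>j\<leftarrow>js. \<beta> j + \<mu> k + of_nat (n k)) * c n) x"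
proof (induction js)
  case Nil thus ?case using fg by simp
next
  case (Cons j js)
  define c' where "c' = (\<lambda>n. (\<Prod>j\<leftarrow>js. \<beta> j + \<mu> k + of_nat (n k)) * c n)"
  have g': "good p c'" unfolding c'_def using good_prodlist[OF g, where \<beta>="\<lambda>j. \<beta> j + \<mu> k" and js=js and k=k]
    by (simp add: add.assoc)
  show ?case
  proof
    fix x assume x: "x \<in> U"
    have "foldr (\<lambda>j g. shift_theta k (\<beta> j) g) (j # js) f x
        = shift_theta k (\<beta> j) (foldr (\<lambda>j g. shift_theta k (\<beta> j) g) js f) x" by simp
    also have "\<dots> = G \<mu> (\<lambda>n. (\<beta> j + \<mu> k + of_nat (n k)) * c' n) x"
      by (rule shift_theta_G[OF g' _ x]) (use Cons in \<open>simp add: c'_def\<close>)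
    finally show "foldr (\<lambda>j g. shift_theta k (\<beta> j) g) (j # js) f x
        = G \<mu> (\<lambda>n. (\<Prod>j\<leftarrow>j # js. \<beta> j + \<mu> k + of_nat (n k)) * c n) x"
      by (simp add: c'_def mult.assoc)
  qed
qed

lemma shift_total_G:
  assumes g: "good p c" and fg: "\<And>y. y \<in> U \<Longrightarrow> f y = G \<mu> c y" and x: "x \<in> U"
  shows "shift_total \<alpha> f x = G \<mu> (\<lambda>n. (\<alpha> + (\<Sum>k\<in>UNIV. \<mu> k) + of_nat (deg n)) * c n) x"
proof -
  have xD: "x \<in> domD p" by (rule xU_D[OF x])
  have "shift_total \<alpha> f x = \<alpha> * G \<mu> c x + (\<Sum>k\<in>UNIV. theta k (G \<mu> c) x)"
    unfolding shift_total_def using fg[OF x] theta_cong[OF x fg] by simp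
  also have "\<dots> = E \<mu> x * (PS (\<lambda>n. \<alpha> * c n) x + (\<Sum>k\<in>UNIV. PS (\<lambda>n. (\<mu> k + of_nat (n k)) * c n) x))"
    by (simp add: G_theta[OF g x] G_def PS_cmult sum_distrib_left algebra_simps)
  also have "(\<Sum>k\<in>UNIV. PS (\<lambda>n. (\<mu> k + of_nat (n k)) * c n) x) = PS (\<lambda>n. \<Sum>k\<in>UNIV. (\<mu> k + of_nat (n k)) * c n) x"
    by (rule PS_sum[symmetric]) (auto intro: good_fac[OF g] xD)
  also have "PS (\<lambda>n. \<alpha> * c n) x + \<dots> = PS (\<lambda>n. \<alpha> * c n + (\<Sum>k\<in>UNIV. (\<mu> k + of_nat (n k)) * c n)) x"
    by (rule PS_add[symmetric]) (auto intro!: good_sum good_fac[OF g] good_polyb[OF g] polyb_const xD)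
  finally show ?thesis
    by (simp add: G_def deg_def sum_distrib_left sum.distrib algebra_simps)
qed

lemma good_prodlist2: "good p c \<Longrightarrow> good p (\<lambda>n. (\<Prod>i\<leftarrow>ls. \<alpha> i + of_nat (deg n)) * c n)"
  by (intro good_polyb polyb_prod_list polyb_add polyb_const polyb_deg)

lemma fold_total:
  assumes g: "good p c" and fg: "\<And>y. y \<in> U \<Longrightarrow> f y = G \<mu> c y"
  shows "\<forall>x\<in>U. foldr (\<lambda>i g. shift_total (\<alpha> i) g) ls f x
             = G \<mu> (\<lambda>n. (\<Prod>i\<leftarrow>ls. \<alpha> i + (\<Sum>k\<in>UNIV. \<mu> k) + of_nat (deg n)) * c n) x"
proof (induction ls)
  case Nil thus ?case using fg by simp
next
  case (Cons i ls)
  define c' where "c' = (\<lambda>n. (\<Prod>i\<leftarrow>ls. \<alpha> i + (\<Sum>k\<in>UNIV. \<mu> k) + of_nat (deg n)) * c n)"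
  have g': "good p c'" unfolding c'_def using good_prodlist2[OF g, where \<alpha>="\<lambda>i. \<alpha> i + (\<Sum>k\<in>UNIV. \<mu> k)" and ls=ls]
    by (simp add: add.assoc)
  show ?case
  proof
    fix x assume x: "x \<in> U"
    have "foldr (\<lambda>i g. shift_total (\<alpha> i) g) (i # ls) f x
        = shift_total (\<alpha> i) (foldr (\<lambda>i g. shift_total (\<alpha> i) g) ls f) x" by simp
    also have "\<dots> = G \<mu> (\<lambda>n. (\<alpha> i + (\<Sum>k\<in>UNIV. \<mu> k) + of_nat (deg n)) * c' n) x"
      by (rule shift_total_G[OF g' _ x]) (use Cons in \<open>simp add: c'_def\<close>)
    finally show "foldr (\<lambda>i g. shift_total (\<alpha> i) g) (i # ls) f x
        = G \<mu> (\<lambda>n. (\<Prod>i\<leftarrow>i # ls. \<alpha> i + (\<Sum>k\<in>UNIV. \<mu> k) + of_nat (deg n)) * c n) x"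
      by (simp add: c'_def mult.assoc)
  qed
qed

lemma G_shift: "x$k * G \<mu> c x = G \<mu> (\<lambda>n. if n k = 0 then 0 else c (n(k := n k - 1))) x"
  by (simp add: G_def PS_shift[symmetric] algebra_simps)

end


lemma pl_upt: "(\<Prod>j\<leftarrow>[m..<n]. f j) = (\<Prod>j\<in>{m..<n}. f j)"
  by (simp add: prod.distinct_set_conv_list[symmetric])

lemma factor_id:
  fixes bk :: "nat \<Rightarrow> complex"
  assumes bp: "bk p = 1" and J: "j0 \<in> {1..p}"
  shows "(1 - bk j0 + of_nat (Suc m)) * (\<Prod>j\<in>{1..<p}. bk j - 1 + (1 - bk j0) + of_nat (Suc m))
       = of_nat (Suc m) * (\<Prod>j\<in>{1..<p}. eta p j0 bk j + of_nat m)"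
proof (cases "j0 = p")
  case True
  have "(\<Prod>j\<in>{1..<p}. eta p j0 bk j + of_nat m) = (\<Prod>j\<in>{1..<p}. bk j - 1 + (1 - bk j0) + of_nat (Suc m))"
    by (rule prod.cong) (auto simp: eta_def True bp algebra_simps)
  thus ?thesis using True bp by simp
next
  case False
  hence j0: "j0 \<in> {1..<p}" using J by auto
  have L: "(\<Prod>j\<in>{1..<p}. bk j - 1 + (1 - bk j0) + of_nat (Suc m))
        = of_nat (Suc m) * (\<Prod>j\<in>{1..<p} - {j0}. bk j - 1 + (1 - bk j0) + of_nat (Suc m))"
    by (subst prod.remove[OF _ j0]) auto
  have R: "(\<Prod>j\<in>{1..<p}. eta p j0 bk j + of_nat m)
        = (2 - bk j0 + of_nat m) * (\<Prod>j\<in>{1..<p} - {j0}. eta p j0 bk j + of_nat m)"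
    using j0 by (subst prod.remove[OF _ j0]) (auto simp: eta_def algebra_simps)
  have "(\<Prod>j\<in>{1..<p} - {j0}. eta p j0 bk j + of_nat m) = (\<Prod>j\<in>{1..<p} - {j0}. bk j - 1 + (1 - bk j0) + of_nat (Suc m))"
    by (rule prod.cong) (auto simp: eta_def algebra_simps)
  thus ?thesis unfolding L R by (simp add: algebra_simps)
qed

lemma coef_step:
  fixes b' :: "nat \<Rightarrow> 'm::finite \<Rightarrow> complex"
  assumes nz: "\<And>j l t. j \<in> {1..<p} \<Longrightarrow> pochhammer (b' j l) t \<noteq> 0"
    and nk: "n k = Suc m"
  shows "fcoef p a' b' n * (of_nat (Suc m) * (\<Prod>j\<in>{1..<p}. b' j k + of_nat m))
       = (\<Prod>i\<in>{1..p}. a' i + of_nat (deg (n(k := m)))) * fcoef p a' b' (n(k := m))"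
proof -
  define n' where "n' = n(k := m)"
  define D where "D l t = (\<Prod>j\<in>{1..<p}. pochhammer (b' j l) t) * fact t" for l t
  define X where "X = of_nat (Suc m) * (\<Prod>j\<in>{1..<p}. b' j k + of_nat m)"
  have D0: "D l t \<noteq> 0" for l t using nz by (auto simp: D_def)
  have X0: "X \<noteq> 0"
  proof -
    have "b' j k + of_nat m \<noteq> 0" if "j \<in> {1..<p}" for j
      using nz[OF that, of k "Suc m"] by (auto simp: pochhammer_Suc)
    thus ?thesis by (auto simp: X_def simp del: of_nat_Suc)
  qed
  have degn: "deg n = Suc (deg n')"
  proof -
    have "deg n = n k + (\<Sum>l\<in>-{k}. n l)" unfolding deg_def
      by (subst sum.remove[of UNIV k]) (auto simp: Compl_eq_Diff_UNIV)
    moreover have "deg n' = n' k + (\<Sum>l\<in>-{k}. n' l)" unfolding deg_def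
      by (subst sum.remove[of UNIV k]) (auto simp: Compl_eq_Diff_UNIV)
    moreover have "(\<Sum>l\<in>-{k}. n' l) = (\<Sum>l\<in>-{k}. n l)" by (rule sum.cong) (auto simp: n'_def)
    ultimately show ?thesis using nk by (simp add: n'_def)
  qed
  have den: "(\<Prod>l\<in>UNIV. D l (n l)) = (\<Prod>l\<in>UNIV. D l (n' l)) * X"
  proof -
    have "(\<Prod>l\<in>UNIV. D l (n l)) = D k (n k) * (\<Prod>l\<in>-{k}. D l (n l))" by (rule prod_split_k)
    moreover have "(\<Prod>l\<in>UNIV. D l (n' l)) = D k (n' k) * (\<Prod>l\<in>-{k}. D l (n' l))" by (rule prod_split_k)
    moreover have "(\<Prod>l\<in>-{k}. D l (n' l)) = (\<Prod>l\<in>-{k}. D l (n l))" by (rule prod.cong) (auto simp: n'_def)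
    moreover have "D k (Suc m) = D k m * X"
    proof -
      have P: "(\<Prod>j\<in>{1..<p}. pochhammer (b' j k) (Suc m)) = (\<Prod>j\<in>{1..<p}. pochhammer (b' j k) m) * (\<Prod>j\<in>{1..<p}. b' j k + of_nat m)"
        by (simp add: pochhammer_Suc prod.distrib)
      show ?thesis unfolding D_def X_def P fact_Suc by (simp only: of_nat_mult mult_ac)
    qed
    ultimately show ?thesis using nk by (simp add: n'_def algebra_simps)
  qed
  have num: "(\<Prod>i\<in>{1..p}. pochhammer (a' i) (deg n)) = (\<Prod>i\<in>{1..p}. pochhammer (a' i) (deg n')) * (\<Prod>i\<in>{1..p}. a' i + of_nat (deg n'))"
    by (simp add: degn pochhammer_Suc prod.distrib)
  have "fcoef p a' b' n * X = (\<Prod>i\<in>{1..p}. pochhammer (a' i) (deg n)) / (\<Prod>l\<in>UNIV. D l (n' l))"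
    unfolding fcoef_def D_def[symmetric] den using X0 by simp
  also have "\<dots> = (\<Prod>i\<in>{1..p}. a' i + of_nat (deg n')) * fcoef p a' b' n'"
    unfolding fcoef_def D_def[symmetric] num by simp
  finally show ?thesis by (simp add: X_def n'_def)
qed

context hsetup
begin

lemma PhiJ_G:
  "PhiJ p a b L J x = G (\<lambda>k. 1 - b (J k) k)
     (fcoef p (\<lambda>i. a i + (\<Sum>k\<in>UNIV. 1 - b (J k) k)) (\<lambda>i k. eta p (J k) (\<lambda>j. b j k) i)) x"
  by (simp add: PhiJ_def Let_def G_def E_def FC_PS)

lemma solves:
  fixes a :: "nat \<Rightarrow> complex" and b :: "nat \<Rightarrow> 'm \<Rightarrow> complex"
  assumes bp: "\<And>k. b p k = 1" and J: "\<And>k. J k \<in> {1..p}"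
    and nz: "\<And>j k t. j \<in> {1..<p} \<Longrightarrow> pochhammer (eta p (J k) (\<lambda>j. b j k) j) t \<noteq> 0"
  shows "solves_FC p a b U (PhiJ p a b L J)"
  unfolding solves_FC_def
proof (intro allI ballI)
  fix k x assume x: "x \<in> U"
  define \<mu> where "\<mu> = (\<lambda>k. 1 - b (J k) k)"
  define a' where "a' = (\<lambda>i. a i + (\<Sum>k\<in>UNIV. \<mu> k))"
  define b' where "b' = (\<lambda>i k. eta p (J k) (\<lambda>j. b j k) i)"
  define c where "c = fcoef p a' b'"
  have g: "good p c" unfolding c_def b'_def by (rule fcoef_good[OF p nz])
  have fP: "\<And>y. y \<in> U \<Longrightarrow> PhiJ p a b L J y = G \<mu> c y"
    by (simp add: PhiJ_G \<mu>_def a'_def b'_def c_def)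
  define c1 where "c1 = (\<lambda>n. (\<Prod>j\<leftarrow>[1..<p]. (b j k - 1) + \<mu> k + of_nat (n k)) * c n)"
  have g1: "good p c1" unfolding c1_def
    using good_prodlist[OF g, where \<beta>="\<lambda>j. b j k - 1 + \<mu> k" and js="[1..<p]" and k=k]
    by (simp add: add.assoc)
  have F1: "\<And>y. y \<in> U \<Longrightarrow> foldr (\<lambda>j g. shift_theta k (b j k - 1) g) [1..<p] (PhiJ p a b L J) y = G \<mu> c1 y"
    using fold_theta[OF g fP, of k "\<lambda>j. b j k - 1" "[1..<p]"] by (simp add: c1_def)
  have lhs: "FC_lhs p b k (PhiJ p a b L J) x = G \<mu> (\<lambda>n. (\<mu> k + of_nat (n k)) * c1 n) x"
    unfolding FC_lhs_def using theta_cong[OF x F1] G_theta[OF g1 x] by simp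
  define c2 where "c2 = (\<lambda>n. (\<Prod>i\<leftarrow>[1..<p+1]. a i + (\<Sum>k\<in>UNIV. \<mu> k) + of_nat (deg n)) * c n)"
  have F2: "foldr (\<lambda>i g. shift_total (a i) g) [1..<p+1] (PhiJ p a b L J) x = G \<mu> c2 x"
    using fold_total[OF g fP, of a "[1..<p+1]"] x by (simp add: c2_def)
  have rhs: "FC_rhs p a k (PhiJ p a b L J) x = G \<mu> (\<lambda>n. if n k = 0 then 0 else c2 (n(k := n k - 1))) x"
    unfolding FC_rhs_def F2 by (rule G_shift)
  have coef: "(\<mu> k + of_nat (n k)) * c1 n = (if n k = 0 then 0 else c2 (n(k := n k - 1)))" for n
  proof (cases "n k")
    case 0
    have "\<mu> k * (\<Prod>j\<in>{1..<p}. (b j k - 1) + \<mu> k) = 0"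
    proof (cases "J k = p")
      case True thus ?thesis by (simp add: \<mu>_def bp)
    next
      case False
      hence "J k \<in> {1..<p}" using J[of k] by auto
      hence "(\<Prod>j\<in>{1..<p}. (b j k - 1) + \<mu> k) = 0"
        by (intro prod_zero) (auto simp: \<mu>_def intro!: bexI[of _ "J k"])
      thus ?thesis by simp
    qed
    thus ?thesis using 0 by (simp add: c1_def pl_upt, blast)
  next
    case (Suc m)
    have fi: "(\<mu> k + of_nat (Suc m)) * (\<Prod>j\<in>{1..<p}. b j k - 1 + \<mu> k + of_nat (Suc m))
       = of_nat (Suc m) * (\<Prod>j\<in>{1..<p}. b' j k + of_nat m)"
      using factor_id[of "\<lambda>j. b j k" p "J k" m, OF bp J] by (simp add: \<mu>_def b'_def)
    have nz': "\<And>j l t. j \<in> {1..<p} \<Longrightarrow> pochhammer (b' j l) t \<noteq> 0" using nz by (simp add: b'_def)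
    have cs: "c n * (of_nat (Suc m) * (\<Prod>j\<in>{1..<p}. b' j k + of_nat m))
       = (\<Prod>i\<in>{1..p}. a' i + of_nat (deg (n(k := m)))) * c (n(k := m))"
      unfolding c_def by (rule coef_step[where p=p and b'=b' and n=n and k=k, OF nz' Suc])
    have "(\<mu> k + of_nat (n k)) * c1 n = c n * ((\<mu> k + of_nat (Suc m)) * (\<Prod>j\<in>{1..<p}. b j k - 1 + \<mu> k + of_nat (Suc m)))"
      by (simp add: c1_def pl_upt Suc algebra_simps del: of_nat_Suc)
    also have "\<dots> = (\<Prod>i\<in>{1..p}. a' i + of_nat (deg (n(k := m)))) * c (n(k := m))"
      by (simp only: fi cs)
    also have "\<dots> = c2 (n(k := m))"
    proof -
      have "{1..<p+1} = {1..p}" by auto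
      thus ?thesis unfolding c2_def pl_upt a'_def by (simp only: add.assoc)
    qed
    finally show ?thesis using Suc by simp
  qed
  show "FC_lhs p b k (PhiJ p a b L J) x = FC_rhs p a k (PhiJ p a b L J) x"
    unfolding lhs rhs coef ..
qed

end


lemma lagrange_poly:
  fixes \<Lambda> :: "nat \<Rightarrow> complex"
  assumes inj: "inj_on \<Lambda> A" and fin: "finite A" and j0: "j0 \<in> A"
  shows "\<exists>q. \<forall>j\<in>A. poly q (\<Lambda> j) = (if j = j0 then 1 else 0)"
proof -
  define P where "P = (\<Prod>j\<in>A-{j0}. [:-\<Lambda> j, 1:])"
  define d where "d = (\<Prod>j\<in>A-{j0}. \<Lambda> j0 - \<Lambda> j)"
  have pP: "poly P z = (\<Prod>j\<in>A-{j0}. z - \<Lambda> j)" for z by (simp add: P_def poly_prod)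
  have d0: "d \<noteq> 0" unfolding d_def using inj j0 fin by (auto simp: inj_on_def)
  show ?thesis
  proof (intro exI[of _ "smult (1/d) P"] ballI)
    fix j assume j: "j \<in> A"
    show "poly (smult (1/d) P) (\<Lambda> j) = (if j = j0 then 1 else 0)"
    proof (cases "j = j0")
      case True thus ?thesis using d0 by (simp add: pP d_def)
    next
      case False
      hence "(\<Prod>i\<in>A-{j0}. \<Lambda> j - \<Lambda> i) = 0" using j fin by (intro prod_zero) auto
      thus ?thesis using False by (simp add: pP)
    qed
  qed
qed

lemma JS_PiE: "{J::'m::finite \<Rightarrow> nat. \<forall>k. J k \<in> A} = PiE UNIV (\<lambda>_. A)"
  by (auto simp: PiE_UNIV_domain)

lemma separation:
  fixes v :: "('m::finite \<Rightarrow> nat) \<Rightarrow> complex" and \<Lambda> :: "'m \<Rightarrow> nat \<Rightarrow> complex"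
  assumes inj: "\<And>k. inj_on (\<Lambda> k) {1..p}"
    and rel: "\<And>w::'m \<Rightarrow> nat. (\<Sum>J\<in>{J. \<forall>k. J k \<in> {1..p}}. v J * (\<Prod>k\<in>UNIV. \<Lambda> k (J k) ^ w k)) = 0"
  shows "\<forall>J\<in>{J. \<forall>k. J k \<in> {1..p}}. v J = 0"
proof
  define JS where "JS = {J::'m \<Rightarrow> nat. \<forall>k. J k \<in> {1..p}}"
  have finJS: "finite JS" unfolding JS_def JS_PiE by (intro finite_PiE) auto
  fix J0 :: "'m \<Rightarrow> nat" assume "J0 \<in> {J. \<forall>k. J k \<in> {1..p}}"
  hence J0: "\<And>k. J0 k \<in> {1..p}" by auto
  have "\<forall>k. \<exists>q. \<forall>j\<in>{1..p}. poly q (\<Lambda> k j) = (if j = J0 k then 1 else 0)"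
    using lagrange_poly[OF inj _ J0] by auto
  then obtain q where q: "\<And>k j. j \<in> {1..p} \<Longrightarrow> poly (q k) (\<Lambda> k j) = (if j = J0 k then 1 else 0)"
    by metis
  define N where "N k = degree (q k)" for k
  define W where "W = PiE (UNIV::'m set) (\<lambda>k. {..N k})"
  have finW: "finite W" unfolding W_def by (intro finite_PiE) auto
  have "0 = (\<Sum>w\<in>W. (\<Prod>k\<in>UNIV. coeff (q k) (w k)) * (\<Sum>J\<in>JS. v J * (\<Prod>k\<in>UNIV. \<Lambda> k (J k) ^ w k)))"
    using rel by (simp add: JS_def)
  also have "\<dots> = (\<Sum>J\<in>JS. v J * (\<Sum>w\<in>W. \<Prod>k\<in>UNIV. coeff (q k) (w k) * \<Lambda> k (J k) ^ w k))"
    by (simp add: sum_distrib_left sum_distrib_right prod.distrib algebra_simps sum.swap[of _ W])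
  also have "\<dots> = (\<Sum>J\<in>JS. v J * (\<Prod>k\<in>UNIV. poly (q k) (\<Lambda> k (J k))))"
  proof (rule sum.cong[OF refl])
    fix J assume "J \<in> JS"
    have "(\<Sum>w\<in>W. \<Prod>k\<in>UNIV. coeff (q k) (w k) * \<Lambda> k (J k) ^ w k)
        = (\<Prod>k\<in>UNIV. \<Sum>i\<in>{..N k}. coeff (q k) i * \<Lambda> k (J k) ^ i)"
      unfolding W_def by (rule prod_sum_PiE[symmetric]) auto
    also have "\<dots> = (\<Prod>k\<in>UNIV. poly (q k) (\<Lambda> k (J k)))"
      by (simp add: poly_altdef N_def mult_ac)
    finally show "v J * (\<Sum>w\<in>W. \<Prod>k\<in>UNIV. coeff (q k) (w k) * \<Lambda> k (J k) ^ w k)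
        = v J * (\<Prod>k\<in>UNIV. poly (q k) (\<Lambda> k (J k)))" by simp
  qed
  also have "\<dots> = (\<Sum>J\<in>JS. v J * (if J = J0 then 1 else 0))"
  proof (rule sum.cong[OF refl])
    fix J assume J: "J \<in> JS"
    have "(\<Prod>k\<in>UNIV. poly (q k) (\<Lambda> k (J k))) = (\<Prod>k\<in>UNIV. if J k = J0 k then 1 else 0)"
      using J by (intro prod.cong) (auto simp: JS_def q)
    also have "\<dots> = (if J = J0 then 1 else 0)"
      by (auto simp: fun_eq_iff prod_zero_iff)
    finally show "v J * (\<Prod>k\<in>UNIV. poly (q k) (\<Lambda> k (J k))) = v J * (if J = J0 then 1 else 0)" by simp
  qed
  also have "\<dots> = v J0" using finJS J0 by (simp add: JS_def if_distrib cong: if_cong)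
  finally show "v J0 = 0" by simp
qed


lemma PS_zero: "PS c 0 = c (\<lambda>_. 0)"
proof -
  have "PS c 0 = (\<Sum>\<^sub>\<infinity>n\<in>{\<lambda>_. 0}. c n * mon 0 n)"
    unfolding PS_def
  proof (rule infsum_cong_neutral)
    fix n :: "'a \<Rightarrow> nat" assume "n \<in> UNIV - {\<lambda>_. 0}"
    then obtain k where "n k \<noteq> 0" by (auto simp: fun_eq_iff)
    hence "mon 0 n = 0" unfolding mon_def by (intro prod_zero) (auto intro!: bexI[of _ k])
    thus "c n * mon 0 n = 0" by simp
  qed auto
  also have "\<dots> = c (\<lambda>_. 0)" by (simp add: mon_def)
  finally show ?thesis .
qed

lemma zero_domD: "p \<ge> 1 \<Longrightarrow> (0::complex^'m::finite) \<in> domD p"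
  by (simp add: domD_def)

lemma norm_vec_le_sum: "norm (s::complex^'m::finite) \<le> (\<Sum>k\<in>UNIV. norm (s$k))"
  unfolding norm_vec_def by (rule L2_set_le_sum) auto

lemma identity_iter:
  fixes h :: "complex^'m::finite \<Rightarrow> complex" and s :: "complex^'m"
  assumes d0: "\<delta> > 0" and e0: "\<epsilon> > 0"
    and holo: "\<And>s k. (\<And>j. j \<noteq> k \<Longrightarrow> Re (s$j) < \<delta>) \<Longrightarrow> (\<lambda>z. h (upd s k z)) holomorphic_on {z. Re z < \<delta>}"
    and zero: "\<And>s. norm s < \<epsilon> \<Longrightarrow> h s = 0"
    and s: "\<forall>k. Re (s$k) < \<delta>"
  shows "h s = 0"
proof -
  define e where "e = min \<delta> (\<epsilon> / real CARD('m))"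
  have e0': "e > 0" using d0 e0 by (simp add: e_def)
  have ed: "e \<le> \<delta>" by (simp add: e_def)
  have base: "norm s < \<epsilon>" if "\<forall>k. norm (s$k) < e" for s :: "complex^'m"
  proof -
    have "norm s \<le> (\<Sum>k\<in>UNIV. norm (s$k))" by (rule norm_vec_le_sum)
    also have "\<dots> < (\<Sum>k\<in>(UNIV::'m set). e)" using sum_strict_mono_ex1[of UNIV "\<lambda>k. norm (s$k)" "\<lambda>k. e"] that by (auto simp: less_imp_le)
    also have "\<dots> = real CARD('m) * e" by simp
    also have "\<dots> \<le> real CARD('m) * (\<epsilon> / real CARD('m))"
      by (rule mult_left_mono) (auto simp: e_def)
    also have "\<dots> = \<epsilon>" by simp
    finally show ?thesis .
  qed
  have P: "\<forall>s. (\<forall>k\<in>K. Re (s$k) < \<delta>) \<and> (\<forall>k. k \<notin> K \<longrightarrow> norm (s$k) < e) \<longrightarrow> h s = 0"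
    if "finite K" for K :: "'m set"
    using that
  proof (induction K rule: finite_induct)
    case empty thus ?case using base zero by auto
  next
    case (insert k K)
    show ?case
    proof (intro allI impI)
      fix s :: "complex^'m"
      assume A: "(\<forall>j\<in>insert k K. Re (s$j) < \<delta>) \<and> (\<forall>j. j \<notin> insert k K \<longrightarrow> norm (s$j) < e)"
      define H where "H = {z::complex. Re z < \<delta>}"
      have oH: "open H" unfolding H_def by (rule open_halfspace_Re_lt)
      have cH: "connected H" unfolding H_def by (rule convex_connected[OF convex_halfspace_Re_lt])
      have Rej: "Re (s$j) < \<delta>" if "j \<noteq> k" for j
      proof (cases "j \<in> K")
        case True thus ?thesis using A by auto
      next
        case False
        hence "norm (s$j) < e" using A that by auto
        thus ?thesis using ed complex_Re_le_cmod[of "s$j"] by linarith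
      qed
      have hol: "(\<lambda>z. h (upd s k z)) holomorphic_on H"
        unfolding H_def by (rule holo) (rule Rej)
      have bH: "ball 0 e \<subseteq> H"
      proof
        fix z :: complex assume "z \<in> ball 0 e"
        hence "norm z < e" by simp
        thus "z \<in> H" using ed complex_Re_le_cmod[of z] by (simp add: H_def)
      qed
      have z0: "h (upd s k z) = 0" if "z \<in> ball 0 e" for z
      proof -
        have "(\<forall>j\<in>K. Re (upd s k z $ j) < \<delta>) \<and> (\<forall>j. j \<notin> K \<longrightarrow> norm (upd s k z $ j) < e)"
          using A that insert.hyps(2) by (auto simp: upd_nth)
        thus ?thesis using insert.IH by blast
      qed
      have "h (upd s k (s$k)) = 0"
      proof (rule analytic_continuation[OF hol oH cH bH])
        show "0 \<in> H" using d0 by (simp add: H_def)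
        show "(0::complex) islimpt ball 0 e" using e0' by (simp add: islimpt_ball)
        show "\<And>z. z \<in> ball 0 e \<Longrightarrow> h (upd s k z) = 0" by (rule z0)
        show "s$k \<in> H" using A by (simp add: H_def)
      qed
      thus "h s = 0" by (simp add: upd_same)
    qed
  qed
  show ?thesis using P[of UNIV] s by auto
qed

locale isetup = hsetup p U L for p U and L :: "'m::finite \<Rightarrow> complex^'m \<Rightarrow> complex" +
  fixes x0 :: "complex^'m"
  assumes x0: "x0 \<in> U"
begin

definition X :: "complex^'m \<Rightarrow> complex^'m" where
  "X s = (\<chi> k. exp (s$k) * x0$k)"

lemma X_cont: "continuous_on A X"
  unfolding X_def by (intro continuous_intros)

lemma X_0: "X 0 = x0"
  by (simp add: X_def vec_eq_iff)

lemma X_upd: "X (upd s k z) = upd (X s) k (exp z * x0$k)"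
  by (simp add: X_def upd_def vec_eq_iff)

lemma near0:
  "\<exists>\<epsilon>>0. \<forall>s. norm s < \<epsilon> \<longrightarrow> X s \<in> U \<and> (\<forall>k. L k (X s) = L k x0 + s$k)"
proof -
  have cX: "isCont X 0" using X_cont[of UNIV] continuous_on_eq_continuous_at open_UNIV by blast
  hence tX: "(X \<longlongrightarrow> x0) (at 0)" by (simp add: isCont_def X_0)
  have Uev: "eventually (\<lambda>s. X s \<in> U) (at 0)"
    by (rule topological_tendstoD[OF tX Uo x0])
  have Lev: "eventually (\<lambda>s. L k (X s) = L k x0 + s$k) (at 0)" for k
  proof -
    have "isCont (L k) x0" using Lc[of k] Uo x0 continuous_on_eq_continuous_at by blast
    hence t1: "((\<lambda>s. L k (X s)) \<longlongrightarrow> L k x0) (at 0)" by (rule isCont_tendsto_compose[OF _ tX])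
    have t2: "((\<lambda>s::complex^'m. s$k) \<longlongrightarrow> 0) (at 0)"
      using tendsto_vec_nth[OF tendsto_ident_at[of "0::complex^'m" UNIV], of k] by simp
    have "((\<lambda>s. L k (X s) - s$k) \<longlongrightarrow> L k x0 - 0) (at 0)" by (intro tendsto_diff t1 t2)
    hence "eventually (\<lambda>s. dist (L k (X s) - s$k) (L k x0) < 1) (at 0)"
      by (intro tendstoD) auto
    thus ?thesis using Uev
    proof eventually_elim
      case (elim s)
      have "exp (L k (X s)) = exp (L k x0 + s$k)"
        using Lexp[OF elim(2)] Lexp[OF x0] by (simp add: X_def exp_add mult.commute)
      moreover have "norm (L k (X s) - (L k x0 + s$k)) < 1"
        using elim(1) by (simp add: dist_norm algebra_simps)
      ultimately show ?case by (rule exp_eq_small)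
    qed
  qed
  have "eventually (\<lambda>s. \<forall>k. L k (X s) = L k x0 + s$k) (at 0)"
    by (rule eventually_all_finite) (rule Lev)
  hence "eventually (\<lambda>s. X s \<in> U \<and> (\<forall>k. L k (X s) = L k x0 + s$k)) (at 0)"
    using Uev by (rule eventually_conj[rotated])
  hence "eventually (\<lambda>s. X s \<in> U \<and> (\<forall>k. L k (X s) = L k x0 + s$k)) (nhds 0)"
    by (rule ev_nhds_of_at) (simp add: X_0 x0)
  thus ?thesis unfolding eventually_nhds_metric by (auto simp: dist_norm)
qed

lemma region: "\<exists>\<delta>>0. \<forall>s. (\<forall>k. Re (s$k) < \<delta>) \<longrightarrow> X s \<in> domD p"
proof -
  obtain \<delta>' where d': "\<delta>' > 0" "(\<lambda>k. nr x0 k + \<delta>') \<in> Reg p"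
    using Reg_slack[OF xU_D[OF x0, unfolded domD_Reg] p] by blast
  define M where "M = (\<Sum>k\<in>UNIV. norm (x0$k))"
  have M0: "0 \<le> M" unfolding M_def by (simp add: sum_nonneg)
  have Mk: "norm (x0$k) \<le> M" for k unfolding M_def by (rule member_le_sum) auto
  define \<delta> where "\<delta> = ln (1 + \<delta>'/(1+M))"
  have ed: "exp \<delta> = 1 + \<delta>'/(1+M)" unfolding \<delta>_def using d' M0 by (intro exp_ln) (auto intro: add_pos_nonneg)
  have d0: "\<delta> > 0" unfolding \<delta>_def using d' M0 by (intro ln_gt_zero) auto
  have "X s \<in> domD p" if s: "\<forall>k. Re (s$k) < \<delta>" for s :: "complex^'m"
    unfolding domD_Reg
  proof (rule Reg_mono[OF d'(2)])
    fix k
    show "0 \<le> nr (X s) k" by (simp add: nr_def)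
    have "nr (X s) k = exp (Re (s$k)) * norm (x0$k)" by (simp add: nr_def X_def norm_mult)
    also have "\<dots> \<le> exp \<delta> * norm (x0$k)" using s[rule_format, of k] by (intro mult_right_mono) auto
    also have "\<dots> = norm (x0$k) + \<delta>' * (norm (x0$k) / (1+M))" by (simp add: ed algebra_simps)
    also have "\<dots> \<le> norm (x0$k) + \<delta>' * 1"
      using Mk[of k] M0 d' by (intro add_left_mono mult_left_mono) (auto simp: divide_le_eq)
    finally show "nr (X s) k \<le> nr x0 k + \<delta>'" by (simp add: nr_def)
  qed
  thus ?thesis using d0 by blast
qed

definition T :: "('m \<Rightarrow> complex) \<Rightarrow> (('m \<Rightarrow> nat) \<Rightarrow> complex) \<Rightarrow> complex^'m \<Rightarrow> complex" where
  "T \<mu> c s = (\<Prod>k\<in>UNIV. exp (\<mu> k * (L k x0 + s$k))) * PS c (X s)"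

lemma upd_upd: "upd (upd x k a) k b = upd x k b"
  by (simp add: upd_def vec_eq_iff)

lemma T_holo:
  fixes s :: "complex^'m"
  assumes g: "good p c" and reg: "\<And>s. (\<forall>k. Re (s$k) < \<delta>) \<Longrightarrow> X s \<in> domD p"
    and s: "\<And>j. j \<noteq> k \<Longrightarrow> Re (s$j) < \<delta>"
  shows "(\<lambda>z. T \<mu> c (upd s k z)) holomorphic_on {z. Re z < \<delta>}"
  unfolding T_def
proof (rule holomorphic_on_mult)
  show "(\<lambda>z. \<Prod>l\<in>UNIV. exp (\<mu> l * (L l x0 + upd s k z $ l))) holomorphic_on {z. Re z < \<delta>}"
  proof -
    have h: "(\<lambda>z. if l = k then z else s$l) holomorphic_on A" for l A
      by (cases "l = k") (auto intro: holomorphic_intros)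
    show ?thesis by (auto simp: upd_nth intro!: holomorphic_intros h)
  qed
  show "(\<lambda>z. PS c (X (upd s k z))) holomorphic_on {z. Re z < \<delta>}"
    unfolding holomorphic_on_def
  proof
    fix z0 assume z0: "z0 \<in> {z. Re z < \<delta>}"
    define y where "y = X (upd s k z0)"
    have yD: "y \<in> domD p" unfolding y_def
      by (rule reg) (use s z0 in \<open>auto simp: upd_nth\<close>)
    have yk: "y$k = exp z0 * x0$k" by (simp add: y_def X_def upd_nth)
    have d1: "(\<lambda>z. exp z * x0$k) field_differentiable at z0"
      by (auto intro!: derivative_eq_intros simp: field_differentiable_def)
    have d2: "(\<lambda>w. PS c (upd y k w)) field_differentiable at ((\<lambda>z. exp z * x0$k) z0)"
      using PS_differentiable[OF g p yD, of k] yk by simp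
    have "((\<lambda>w. PS c (upd y k w)) \<circ> (\<lambda>z. exp z * x0$k)) field_differentiable at z0"
      by (rule field_differentiable_compose[OF d1 d2])
    moreover have "((\<lambda>w. PS c (upd y k w)) \<circ> (\<lambda>z. exp z * x0$k)) = (\<lambda>z. PS c (X (upd s k z)))"
      by (simp add: fun_eq_iff y_def X_upd upd_upd)
    ultimately show "(\<lambda>z. PS c (X (upd s k z))) field_differentiable at z0 within {z. Re z < \<delta>}"
      by (simp add: field_differentiable_at_within)
  qed
qed

lemma T_G: "X s \<in> U \<Longrightarrow> (\<forall>k. L k (X s) = L k x0 + s$k) \<Longrightarrow> G \<mu> c (X s) = T \<mu> c s"
  by (simp add: G_def E_def T_def)

lemma X_shift:
  "X (s + (\<chi> k. of_nat (n k) * (2 * of_real pi * \<i>))) = X s"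
proof -
  have "exp (z + of_nat m * (2 * of_real pi * \<i>)) = exp z" for z m
    by (simp add: exp_add exp_of_nat_mult)
  thus ?thesis by (simp add: X_def vec_eq_iff)
qed

lemma T_shift:
  "T \<mu> c (s + (\<chi> k. of_nat (n k) * (2 * of_real pi * \<i>)))
     = (\<Prod>k\<in>UNIV. exp (2 * of_real pi * \<i> * \<mu> k) ^ n k) * T \<mu> c s"
proof -
  have "exp (\<mu> k * (L k x0 + (s$k + of_nat (n k) * (2 * of_real pi * \<i>))))
      = exp (2 * of_real pi * \<i> * \<mu> k) ^ n k * exp (\<mu> k * (L k x0 + s$k))" for k
  proof -
    have "\<mu> k * (L k x0 + (s$k + of_nat (n k) * (2 * of_real pi * \<i>)))
        = of_nat (n k) * (2 * of_real pi * \<i> * \<mu> k) + \<mu> k * (L k x0 + s$k)"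
      by (simp add: algebra_simps)
    thus ?thesis by (simp add: exp_add exp_of_nat_mult)
  qed
  thus ?thesis unfolding T_def X_shift by (simp add: prod.distrib mult_ac)
qed

lemma indep:
  fixes b :: "nat \<Rightarrow> 'm \<Rightarrow> complex" and w :: "('m \<Rightarrow> nat) \<Rightarrow> complex"
    and c :: "('m \<Rightarrow> nat) \<Rightarrow> ('m \<Rightarrow> nat) \<Rightarrow> complex"
  assumes g: "\<And>J. J \<in> {J. \<forall>k. J k \<in> {1..p}} \<Longrightarrow> good p (c J)"
    and c0: "\<And>J. J \<in> {J. \<forall>k. J k \<in> {1..p}} \<Longrightarrow> c J (\<lambda>_. 0) = 1"
    and inj: "\<And>k. inj_on (\<lambda>j. exp (2 * of_real pi * \<i> * (1 - b j k))) {1..p}"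
    and zero: "\<forall>x\<in>U. (\<Sum>J\<in>{J. \<forall>k. J k \<in> {1..p}}. w J * G (\<lambda>k. 1 - b (J k) k) (c J) x) = 0"
  shows "\<forall>J\<in>{J. \<forall>k. J k \<in> {1..p}}. w J = 0"
proof -
  define JS where "JS = {J::'m \<Rightarrow> nat. \<forall>k. J k \<in> {1..p}}"
  define \<mu> where "\<mu> J = (\<lambda>k. 1 - b (J k) k)" for J :: "'m \<Rightarrow> nat"
  define h where "h s = (\<Sum>J\<in>JS. w J * T (\<mu> J) (c J) s)" for s
  obtain \<epsilon> where e: "\<epsilon> > 0" "\<And>s. norm s < \<epsilon> \<Longrightarrow> X s \<in> U \<and> (\<forall>k. L k (X s) = L k x0 + s$k)"
    using near0 by blast
  obtain \<delta> where d: "\<delta> > 0" "\<And>s. (\<forall>k. Re (s$k) < \<delta>) \<Longrightarrow> X s \<in> domD p"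
    using region by blast
  have h0: "h s = 0" if "\<forall>k. Re (s$k) < \<delta>" for s :: "complex^'m"
  proof (rule identity_iter[OF d(1) e(1) _ _ that])
    fix s :: "complex^'m" and k assume "\<And>j. j \<noteq> k \<Longrightarrow> Re (s$j) < \<delta>"
    thus "(\<lambda>z. h (upd s k z)) holomorphic_on {z. Re z < \<delta>}"
      unfolding h_def using d(2)
      by (intro holomorphic_on_sum holomorphic_on_mult holomorphic_on_const T_holo g) (auto simp: JS_def)
  next
    fix s :: "complex^'m" assume "norm s < \<epsilon>"
    hence "X s \<in> U" "\<forall>k. L k (X s) = L k x0 + s$k" using e(2) by auto
    hence "h s = (\<Sum>J\<in>JS. w J * G (\<mu> J) (c J) (X s))" unfolding h_def by (simp add: T_G)
    also have "\<dots> = 0" using zero \<open>X s \<in> U\<close> by (simp add: JS_def \<mu>_def)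
    finally show "h s = 0" .
  qed
  have sep: "\<forall>J\<in>JS. w J * T (\<mu> J) (c J) s = 0" if s: "\<forall>k. Re (s$k) < \<delta>" for s :: "complex^'m"
  proof -
    define \<Lambda> where "\<Lambda> k j = exp (2 * of_real pi * \<i> * (1 - b j k))" for k j
    have "\<forall>J\<in>{J. \<forall>k. J k \<in> {1..p}}. w J * T (\<mu> J) (c J) s = 0"
    proof (rule separation[where \<Lambda>=\<Lambda>])
      show "\<And>k. inj_on (\<Lambda> k) {1..p}" unfolding \<Lambda>_def using inj by simp
      fix n :: "'m \<Rightarrow> nat"
      define s' where "s' = s + (\<chi> k. of_nat (n k) * (2 * of_real pi * \<i>))"
      have "\<forall>k. Re (s'$k) < \<delta>" using s by (simp add: s'_def)
      hence "h s' = 0" by (rule h0)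
      moreover have "h s' = (\<Sum>J\<in>JS. w J * T (\<mu> J) (c J) s * (\<Prod>k\<in>UNIV. \<Lambda> k (J k) ^ n k))"
        unfolding h_def s'_def T_shift by (simp add: \<Lambda>_def \<mu>_def mult_ac)
      ultimately show "(\<Sum>J\<in>{J. \<forall>k. J k \<in> {1..p}}. w J * T (\<mu> J) (c J) s * (\<Prod>k\<in>UNIV. \<Lambda> k (J k) ^ n k)) = 0"
        by (simp add: JS_def)
    qed
    thus ?thesis by (simp add: JS_def)
  qed
  show ?thesis
  proof
    fix J :: "'m \<Rightarrow> nat" assume J: "J \<in> {J. \<forall>k. J k \<in> {1..p}}"
    have gJ: "good p (c J)" by (rule g[OF J])
    have "isCont (PS (c J)) 0" by (rule PS_isCont[OF gJ p zero_domD[OF p]])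
    moreover have "PS (c J) 0 = 1" using c0[OF J] by (simp add: PS_zero)
    ultimately have "eventually (\<lambda>y. dist (PS (c J) y) 1 < 1) (at 0)"
      unfolding isCont_def by (intro tendstoD) auto
    then obtain r where r: "r > 0" "\<And>y. y \<noteq> 0 \<Longrightarrow> dist y 0 < r \<Longrightarrow> dist (PS (c J) y) 1 < 1"
      unfolding eventually_at by blast
    define e0 where "e0 = min (1/2) (r / (2 * (norm x0 + 1)))"
    have "0 < 2 * (norm x0 + 1)" by (smt (verit) norm_ge_zero)
    hence e00: "e0 > 0" using r(1) unfolding e0_def by simp
    have e01: "e0 < 1" by (simp add: e0_def)
    define s where "s = (\<chi> k::'m. complex_of_real (ln e0))"
    have Xs: "X s = e0 *\<^sub>R x0" using e00 by (simp add: X_def s_def vec_eq_iff exp_of_real scaleR_conv_of_real[symmetric])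
    have "ln e0 < 0" using e00 e01 by simp
    hence sR: "\<forall>k. Re (s$k) < \<delta>" using d(1) by (simp add: s_def)
    have "PS (c J) (X s) \<noteq> 0"
    proof -
      obtain k0 :: 'm where True by simp
      have False: "x0 \<noteq> 0" using Unz[OF x0, of k0] by auto
      have "norm (X s) = e0 * norm x0" using e00 by (simp add: Xs)
      also have "\<dots> \<le> r / (2 * (norm x0 + 1)) * norm x0" by (intro mult_right_mono) (auto simp: e0_def)
      also have "\<dots> = r * (norm x0 / (2 * (norm x0 + 1)))" by simp
      also have "\<dots> < r * 1"
      proof (rule mult_strict_left_mono[OF _ r(1)])
        have "0 < 2 * (norm x0 + 1)" by (smt (verit) norm_ge_zero)
        thus "norm x0 / (2 * (norm x0 + 1)) < 1" by (simp add: divide_less_eq)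
      qed
      also have "\<dots> = r" by simp
      finally have "dist (X s) 0 < r" by simp
      moreover have "X s \<noteq> 0" using False e00 by (simp add: Xs)
      ultimately have "dist (PS (c J) (X s)) 1 < 1" by (rule r(2)[rotated])
      thus ?thesis by auto
    qed
    hence "T (\<mu> J) (c J) s \<noteq> 0" by (simp add: T_def)
    moreover have "w J * T (\<mu> J) (c J) s = 0" using sep[OF sR] J by (simp add: JS_def)
    ultimately show "w J = 0" by simp
  qed
qed

end


lemma poch_nonint: "(z::complex) \<notin> \<int> \<Longrightarrow> pochhammer z t \<noteq> 0"
  by (auto simp: pochhammer_eq_0_iff)

lemma nonint_diff_sym: "(x::complex) - y \<notin> \<int> \<Longrightarrow> y - x \<notin> \<int>"
  by (metis Ints_minus minus_diff_eq)

lemma eta_nonint: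
  fixes b :: "nat \<Rightarrow> 'm \<Rightarrow> complex"
  assumes bp: "\<forall>k. b p k = 1"
    and C2: "\<forall>k. \<forall>j j'. 1 \<le> j \<and> j < j' \<and> j' \<le> p \<longrightarrow> b j k - b j' k \<notin> \<int>"
    and J: "J k \<in> {1..p}" and j: "j \<in> {1..<p}"
  shows "eta p (J k) (\<lambda>j. b j k) j \<notin> \<int>"
proof -
  have d: "b i k - b i' k \<notin> \<int>" if "i \<in> {1..p}" "i' \<in> {1..p}" "i \<noteq> i'" for i i'
  proof (cases "i < i'")
    case True thus ?thesis using C2 that by auto
  next
    case False
    hence "b i' k - b i k \<notin> \<int>" using C2 that by auto
    thus ?thesis by (rule nonint_diff_sym)
  qed
  have bj: "b j k \<notin> \<int>" using d[of j p] j bp by auto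
  show ?thesis
  proof (cases "J k = p")
    case True
    thus ?thesis using bj bp j by (simp add: eta_def)
  next
    case False
    hence j0: "J k \<in> {1..<p}" using J by auto
    show ?thesis
    proof (cases "j = J k")
      case True
      have "eta p (J k) (\<lambda>j. b j k) j = 2 - b j k" using True j by (simp add: eta_def algebra_simps)
      moreover have "2 - b j k \<notin> \<int>"
      proof
        assume "2 - b j k \<in> \<int>"
        hence "2 - (2 - b j k) \<in> \<int>" by (intro Ints_diff) auto
        thus False using bj by simp
      qed
      ultimately show ?thesis by simp
    next
      case False
      have "eta p (J k) (\<lambda>j. b j k) j = 1 + (b j k - b (J k) k)" using False j by (simp add: eta_def algebra_simps)
      moreover have "1 + (b j k - b (J k) k) \<notin> \<int>"
      proof
        assume "1 + (b j k - b (J k) k) \<in> \<int>"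
        hence "1 + (b j k - b (J k) k) - 1 \<in> \<int>" by (intro Ints_diff) auto
        thus False using d[of j "J k"] j j0 False by auto
      qed
      ultimately show ?thesis by simp
    qed
  qed
qed

lemma fcoef_zero: "fcoef p a b (\<lambda>_. 0) = 1"
  by (simp add: fcoef_def deg_def)

lemma exp_inj_b:
  fixes b :: "nat \<Rightarrow> 'm \<Rightarrow> complex"
  assumes C2: "\<forall>k. \<forall>j j'. 1 \<le> j \<and> j < j' \<and> j' \<le> p \<longrightarrow> b j k - b j' k \<notin> \<int>"
  shows "inj_on (\<lambda>j. exp (2 * of_real pi * \<i> * (1 - b j k))) {1..p}"
proof (rule inj_onI)
  fix i i' assume i: "i \<in> {1..p}" and i': "i' \<in> {1..p}"
    and e: "exp (2 * of_real pi * \<i> * (1 - b i k)) = exp (2 * of_real pi * \<i> * (1 - b i' k))"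
  show "i = i'"
  proof (rule ccontr)
    assume ne: "i \<noteq> i'"
    obtain n :: int where n: "2 * of_real pi * \<i> * (1 - b i k) = 2 * of_real pi * \<i> * (1 - b i' k) + of_int (2 * n) * pi * \<i>"
      using e exp_eq by blast
    have "2 * of_real pi * \<i> * (b i' k - b i k) = 2 * of_real pi * \<i> * of_int n"
      using n by (simp add: algebra_simps)
    hence "b i' k - b i k = of_int n" by simp
    hence "b i' k - b i k \<in> \<int>" by simp
    moreover have "b i k - b i' k \<in> \<int>" using \<open>b i' k - b i k \<in> \<int>\<close> nonint_diff_sym by blast
    ultimately show False using C2 i i' ne by (cases "i < i'") auto
  qed
qed

theorem mainTheorem4:
  fixes p :: nat and a :: "nat \<Rightarrow> complex" and b :: "nat \<Rightarrow> 'm::finite \<Rightarrow> complex"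
    and U :: "(complex^'m) set" and L :: "'m \<Rightarrow> complex^'m \<Rightarrow> complex"
  assumes p: "p \<ge> 1"
    and bp: "\<forall>k. b p k = 1"
    and C1: "\<forall>i\<in>{1..p}. \<forall>J::'m \<Rightarrow> nat. (\<forall>k. J k \<in> {1..p}) \<longrightarrow>
               a i - (\<Sum>k\<in>UNIV. b (J k) k) \<notin> \<int>"
    and C2: "\<forall>k. \<forall>j j'. 1 \<le> j \<and> j < j' \<and> j' \<le> p \<longrightarrow> b j k - b j' k \<notin> \<int>"
    and U: "open U" "simply_connected U" "U \<noteq> {}"
           "U \<subseteq> domD p \<inter> {x. (\<Prod>k\<in>UNIV. x $ k) \<noteq> 0}"
    and L: "\<forall>k. continuous_on U (L k) \<and> (\<forall>x\<in>U. exp (L k x) = x $ k)"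
  shows "(\<forall>J. (\<forall>k. J k \<in> {1..p}) \<longrightarrow>
            holo_several U (PhiJ p a b L J) \<and> solves_FC p a b U (PhiJ p a b L J))
       \<and> (\<forall>c :: ('m \<Rightarrow> nat) \<Rightarrow> complex.
            (\<forall>x\<in>U. (\<Sum>J\<in>{J. \<forall>k. J k \<in> {1..p}}. c J * PhiJ p a b L J x) = 0)
            \<longrightarrow> (\<forall>J\<in>{J. \<forall>k. J k \<in> {1..p}}. c J = 0))"
proof -
  interpret hsetup p U L
  proof
    show "p \<ge> 1" by (rule p)
    show "open U" by (rule U(1))
    show "U \<subseteq> domD p" using U(4) by auto
    show "\<And>x k. x \<in> U \<Longrightarrow> x$k \<noteq> 0" using U(4) by auto
    show "\<And>k. continuous_on U (L k)" using L by auto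
    show "\<And>k x. x \<in> U \<Longrightarrow> exp (L k x) = x$k" using L by auto
  qed
  define \<mu> where "\<mu> J = (\<lambda>k. 1 - b (J k) k)" for J :: "'m \<Rightarrow> nat"
  define cf where "cf J = fcoef p (\<lambda>i. a i + (\<Sum>k\<in>UNIV. 1 - b (J k) k)) (\<lambda>i k. eta p (J k) (\<lambda>j. b j k) i)"
    for J :: "'m \<Rightarrow> nat"
  have Phi: "PhiJ p a b L J = G (\<mu> J) (cf J)" for J
    by (simp add: fun_eq_iff PhiJ_G \<mu>_def cf_def)
  have nz: "\<And>j k t. j \<in> {1..<p} \<Longrightarrow> pochhammer (eta p (J k) (\<lambda>j. b j k) j) t \<noteq> 0"
    if J: "\<forall>k. J k \<in> {1..p}" for J :: "'m \<Rightarrow> nat"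
    using eta_nonint[OF bp C2] J poch_nonint by blast
  have gcf: "good p (cf J)" if J: "\<forall>k. J k \<in> {1..p}" for J
    unfolding cf_def by (rule fcoef_good[OF p nz[OF J]])
  have part1: "holo_several U (PhiJ p a b L J) \<and> solves_FC p a b U (PhiJ p a b L J)"
    if J: "\<forall>k. J k \<in> {1..p}" for J
  proof
    show "solves_FC p a b U (PhiJ p a b L J)"
      by (rule solves) (use bp J nz[OF J] in auto)
    show "holo_several U (PhiJ p a b L J)"
      unfolding holo_several_def Phi
    proof (intro conjI ballI allI)
      show "continuous_on U (G (\<mu> J) (cf J))"
        unfolding G_def[abs_def] E_def
        by (intro continuous_intros continuous_on_subset[OF PS_cont[OF gcf[OF J] p] UD]
            continuous_on_subset[OF Lc] ) auto
      fix x k assume x: "x \<in> U"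
      have "((\<lambda>z. E (\<mu> J) (upd x k z) * PS (cf J) (upd x k z)) has_field_derivative
          E (\<mu> J) x * \<mu> J k * inverse (x$k) * PS (cf J) (upd x k (x$k)) +
          (\<Sum>\<^sub>\<infinity>n. cf J n * of_nat (n k) * mon x (n(k := n k - 1))) * E (\<mu> J) (upd x k (x$k))) (at (x$k))"
        by (rule DERIV_mult[OF E_deriv[OF x] PS_deriv(2)[OF gcf[OF J] p xU_D[OF x]]])
      thus "(\<lambda>z. G (\<mu> J) (cf J) (upd x k z)) field_differentiable at (x$k)"
        unfolding G_def field_differentiable_def by blast
    qed
  qed
  have part2: "\<forall>J\<in>{J. \<forall>k. J k \<in> {1..p}}. w J = 0"
    if zero: "\<forall>x\<in>U. (\<Sum>J\<in>{J. \<forall>k. J k \<in> {1..p}}. w J * PhiJ p a b L J x) = 0" for w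
  proof -
    obtain x0 where x0: "x0 \<in> U" using U(3) by blast
    interpret isetup p U L x0 by unfold_locales (rule x0)
    show ?thesis
    proof (rule indep[where c=cf and b=b])
      show "\<And>J. J \<in> {J. \<forall>k. J k \<in> {1..p}} \<Longrightarrow> good p (cf J)" using gcf by auto
      show "\<And>J. J \<in> {J. \<forall>k. J k \<in> {1..p}} \<Longrightarrow> cf J (\<lambda>_. 0) = 1" by (simp add: cf_def fcoef_zero)
      show "\<And>k. inj_on (\<lambda>j. exp (2 * of_real pi * \<i> * (1 - b j k))) {1..p}" by (rule exp_inj_b[OF C2])
      show "\<forall>x\<in>U. (\<Sum>J\<in>{J. \<forall>k. J k \<in> {1..p}}. w J * G (\<lambda>k. 1 - b (J k) k) (cf J) x) = 0"
        using zero by (simp add: Phi \<mu>_def)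
    qed
  qed
  show ?thesis using part1 part2 by blast
qed


end
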